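(* Let $\lambda_0,\lambda_1,c_1\ge0$ and $p_0,p_1\in(0,1)$. Let $\{V(n)\}_{n\in\mathbb{Z}}$ be independent random variables with $V(n)=\lambda_0\xi_n$ for even $n$ and $V(n)=\lambda_1\xi_n+c_1$ for odd $n$, where $\xi_n$ is Bernoulli, equal to $1$ with probability $p_0$ (n even), resp. $p_1$ (n odd), and $0$ otherwise. Let $H_V$ be the operator $(H_V\phi)(n)=\phi(n+1)+\phi(n-1)+V(n)\phi(n)$ on $\ell^2(\mathbb{Z})$ and $\Sigma$ its almost sure spectrum. Write $R_1=\sqrt{(\lambda_0+c_1)^2-4(c_1\lambda_0-4)}$ and $R_2=\sqrt{(\lambda_0+\lambda_1+c_1)^2-4(\lambda_0(\lambda_1+c_1)-4)}$. Then: (1) If $\lambda_0\le c_1\le c_1+\lambda_1$, then $\mathbb{R}\setminus\Sigma=\big(-\infty,\tfrac12(c_1-\sqrt{c_1^2+16})\big)\cup\big(0,\tfrac12(\lambda_0+c_1-R_1)\big)\cup(\lambda_0,c_1)\cup\big(\tfrac12(\lambda_0+c_1+R_1),c_1+\lambda_1\big)\cup\big(\tfrac12(\lambda_0+\lambda_1+c_1+R_2),\infty\big).$ (2) If $c_1<\lambda_0<c_1+\lambda_1$, then $\mathbb{R}\setminus\Sigma=\big(-\infty,\tfrac12(c_1-\sqrt{c_1^2+16})\big)\cup\big(0,\tfrac12(\lambda_0+c_1-R_1)\big)\cup\big(\tfrac12(c_1+\sqrt{c_1^2+16}),\tfrac12(\lambda_0+\lambda_1+c_1-R_2)\big)\cup\big(\tfrac12(\lambda_0+c_1+R_1),c_1+\lambda_1\big)\cup\big(\tfrac12(\lambda_0+\lambda_1+c_1+R_2),\infty\big).$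 (3) If $c_1\le c_1+\lambda_1\le\lambda_0$, then $\mathbb{R}\setminus\Sigma=\big(-\infty,\tfrac12(c_1-\sqrt{c_1^2+16})\big)\cup\big(0,\tfrac12(\lambda_0+c_1-R_1)\big)\cup\big(\tfrac12(c_1+\sqrt{c_1^2+16}),\tfrac12(\lambda_0+\lambda_1+c_1-R_2)\big)\cup\big(\tfrac12(c_1+\lambda_1+\sqrt{(c_1+\lambda_1)^2+16}),\lambda_0\big)\cup\big(\tfrac12(\lambda_0+\lambda_1+c_1+R_2),\infty\big).$ Here an interval $(a,b)$ with $a\ge b$ is understood to be empty.
   Context: The spectrum of a bounded operator $H$ is $\{E\in\mathbb{R}: H-E\text{ has no bounded inverse}\}$; the almost sure spectrum $\Sigma$ is the deterministic set with $\sigma(H_V)=\Sigma$ for almost every realization of the potential. *)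

theory Defs
  imports "HOL-Probability.Probability"
begin

definition l2Z :: "(int \<Rightarrow> complex) set" where
  "l2Z = {\<phi>. (\<lambda>n. (cmod (\<phi> n))\<^sup>2) summable_on UNIV}"

definition l2norm :: "(int \<Rightarrow> complex) \<Rightarrow> real" where
  "l2norm \<phi> = sqrt (infsum (\<lambda>n. (cmod (\<phi> n))\<^sup>2) UNIV)"

definition schrod :: "(int \<Rightarrow> real) \<Rightarrow> (int \<Rightarrow> complex) \<Rightarrow> (int \<Rightarrow> complex)" where
  "schrod V \<phi> = (\<lambda>n. \<phi> (n + 1) + \<phi> (n - 1) + complex_of_real (V n) * \<phi> n)"

definition schrod_spectrum :: "(int \<Rightarrow> real) \<Rightarrow> real set" where
  "schrod_spectrum V = {E. \<not> (\<exists>G. G ` l2Z \<subseteq> l2Z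
      \<and> (\<exists>C. \<forall>\<phi>\<in>l2Z. l2norm (G \<phi>) \<le> C * l2norm \<phi>)
      \<and> (\<forall>\<phi>\<in>l2Z. G (\<lambda>n. schrod V \<phi> n - complex_of_real E * \<phi> n) = \<phi>)
      \<and> (\<forall>\<phi>\<in>l2Z. (\<lambda>n. schrod V (G \<phi>) n - complex_of_real E * G \<phi> n) = \<phi>))}"

definition bern_measure :: "real \<Rightarrow> real \<Rightarrow> (int \<Rightarrow> bool) measure" where
  "bern_measure p0 p1 = PiM UNIV (\<lambda>n::int. measure_pmf (bernoulli_pmf (if even n then p0 else p1)))"

definition pot :: "real \<Rightarrow> real \<Rightarrow> real \<Rightarrow> (int \<Rightarrow> bool) \<Rightarrow> int \<Rightarrow> real" where
  "pot l0 l1 c1 \<xi> n = (if even n then l0 * (if \<xi> n then 1 else 0)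
                         else l1 * (if \<xi> n then 1 else 0) + c1)"

end

theory Submission
  imports Defs
begin

definition nsq :: "(int \<Rightarrow> complex) \<Rightarrow> real" where
  "nsq \<phi> = infsum (\<lambda>n. (cmod (\<phi> n))\<^sup>2) UNIV"

lemma l2norm_nsq: "l2norm \<phi> = sqrt (nsq \<phi>)"
  by (simp add: l2norm_def nsq_def)

lemma l2Z_iff: "\<phi> \<in> l2Z \<longleftrightarrow> (\<lambda>n. (cmod (\<phi> n))\<^sup>2) summable_on UNIV"
  by (simp add: l2Z_def)

lemma nsq_nonneg: "nsq \<phi> \<ge> 0"
  unfolding nsq_def by (rule infsum_nonneg) auto

lemma rsum_cmp:
  fixes f g :: "'a \<Rightarrow> real"
  assumes "g summable_on A" "\<And>n. n \<in> A \<Longrightarrow> \<bar>f n\<bar> \<le> g n"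
  shows "f summable_on A"
proof -
  have "(\<lambda>n. norm (f n)) summable_on A"
    by (rule summable_on_comparison_test[OF assms(1)]) (use assms(2) in auto)
  then show ?thesis by (rule abs_summable_summable)
qed

lemma rsum_diff:
  fixes f g :: "'a \<Rightarrow> real"
  assumes "f summable_on A" "g summable_on A"
  shows "(\<lambda>n. f n - g n) summable_on A" "infsum (\<lambda>n. f n - g n) A = infsum f A - infsum g A"
proof -
  have g': "(\<lambda>n. - g n) summable_on A" using summable_on_uminus assms(2) by blast
  have e: "(\<lambda>n. f n - g n) = (\<lambda>n. f n + (- g n))" by auto
  show "(\<lambda>n. f n - g n) summable_on A" unfolding e using summable_on_add[OF assms(1) g'] .
  show "infsum (\<lambda>n. f n - g n) A = infsum f A - infsum g A"
    unfolding e using infsum_add[OF assms(1) g'] infsum_uminus[of g A] by simp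
qed

lemma rsum_shift:
  fixes f :: "int \<Rightarrow> 'b::{topological_ab_group_add,t2_space}"
  assumes "f summable_on UNIV"
  shows "(\<lambda>n. f (n + k)) summable_on UNIV" "infsum (\<lambda>n. f (n + k)) UNIV = infsum f UNIV"
proof -
  have b: "bij_betw (\<lambda>n::int. n + k) UNIV UNIV"
    by (rule bij_betwI[where g="\<lambda>n. n - k"]) auto
  show "(\<lambda>n. f (n + k)) summable_on UNIV"
    using summable_on_reindex_bij_betw[OF b, of f] assms by (simp add: comp_def)
  show "infsum (\<lambda>n. f (n + k)) UNIV = infsum f UNIV"
    using infsum_reindex_bij_betw[OF b, of f] by simp
qed

lemma l2_shift:
  assumes "\<phi> \<in> l2Z"
  shows "(\<lambda>n. \<phi> (n + k)) \<in> l2Z" "nsq (\<lambda>n. \<phi> (n + k)) = nsq \<phi>"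
  using rsum_shift[of "\<lambda>n. (cmod (\<phi> n))\<^sup>2" k] assms by (auto simp: l2Z_iff nsq_def)

lemma l2_shift':
  assumes "\<phi> \<in> l2Z"
  shows "(\<lambda>n. \<phi> (n - k)) \<in> l2Z" "nsq (\<lambda>n. \<phi> (n - k)) = nsq \<phi>"
  using l2_shift[OF assms, of "-k"] by auto

lemma l2_single:
  assumes "\<phi> \<in> l2Z"
  shows "(cmod (\<phi> n))\<^sup>2 \<le> nsq \<phi>"
proof -
  have "infsum (\<lambda>n. (cmod (\<phi> n))\<^sup>2) {n} \<le> infsum (\<lambda>n. (cmod (\<phi> n))\<^sup>2) UNIV"
    by (rule infsum_mono_neutral) (use assms in \<open>auto simp: l2Z_iff\<close>)
  then show ?thesis by (simp add: nsq_def)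
qed

lemma l2_finite_bound:
  assumes "\<And>F. finite F \<Longrightarrow> (\<Sum>n\<in>F. (cmod (\<phi> n))\<^sup>2) \<le> B"
  shows "\<phi> \<in> l2Z" "nsq \<phi> \<le> B"
proof -
  show s: "\<phi> \<in> l2Z" unfolding l2Z_iff
    by (rule nonneg_bdd_above_summable_on) (use assms in \<open>auto intro!: bdd_aboveI2\<close>)
  show "nsq \<phi> \<le> B" unfolding nsq_def
    by (rule infsum_le_finite_sums) (use s assms in \<open>auto simp: l2Z_iff\<close>)
qed

lemma l2_finite_support:
  assumes "finite S" "\<And>n. n \<notin> S \<Longrightarrow> \<phi> n = 0"
  shows "\<phi> \<in> l2Z" "nsq \<phi> = (\<Sum>n\<in>S. (cmod (\<phi> n))\<^sup>2)"
proof -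
  have "infsum (\<lambda>n. (cmod (\<phi> n))\<^sup>2) UNIV = infsum (\<lambda>n. (cmod (\<phi> n))\<^sup>2) S"
    by (rule infsum_cong_neutral) (use assms in auto)
  then show "nsq \<phi> = (\<Sum>n\<in>S. (cmod (\<phi> n))\<^sup>2)" using assms(1) by (simp add: nsq_def)
  have "(\<lambda>n. (cmod (\<phi> n))\<^sup>2) summable_on S" using assms(1) by simp
  then show "\<phi> \<in> l2Z" unfolding l2Z_iff
    by (rule summable_on_cong_neutral[THEN iffD1, rotated -1]) (use assms in auto)
qed

lemma sq3: "((x::real) + y + z)\<^sup>2 \<le> 3 * (x\<^sup>2 + y\<^sup>2 + z\<^sup>2)"
proof -
  have "0 \<le> (x-y)\<^sup>2+(y-z)\<^sup>2+(x-z)\<^sup>2" by simp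
  then show ?thesis by (simp add: power2_eq_square algebra_simps)
qed

lemma cmod3_sq: "(cmod (a + b + c))\<^sup>2 \<le> 3 * ((cmod a)\<^sup>2 + (cmod b)\<^sup>2 + (cmod c)\<^sup>2)"
proof -
  have "cmod (a + b + c) \<le> cmod a + cmod b + cmod c" by (metis norm_triangle_ineq order_trans add_mono order_refl)
  then have "(cmod (a + b + c))\<^sup>2 \<le> (cmod a + cmod b + cmod c)\<^sup>2" by (simp add: power_mono)
  also have "\<dots> \<le> 3 * ((cmod a)\<^sup>2 + (cmod b)\<^sup>2 + (cmod c)\<^sup>2)" by (rule sq3)
  finally show ?thesis .
qed

definition loc :: "(int \<Rightarrow> complex) \<Rightarrow> (int \<Rightarrow> complex) \<Rightarrow> (int \<Rightarrow> complex) \<Rightarrow> (int \<Rightarrow> complex) \<Rightarrow> (int \<Rightarrow> complex)" where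
  "loc a b c \<phi> = (\<lambda>n. a n * \<phi> (n - 1) + b n * \<phi> n + c n * \<phi> (n + 1))"

lemma loc_diff: "loc a b c (\<lambda>n. f n - g n) = (\<lambda>n. loc a b c f n - loc a b c g n)"
  by (simp add: loc_def fun_eq_iff algebra_simps)

lemma locpow_diff: "(loc a b c ^^ k) (\<lambda>n. f n - g n) = (\<lambda>n. (loc a b c ^^ k) f n - (loc a b c ^^ k) g n)"
  by (induction k) (simp_all add: loc_diff)

definition L2F :: "int set \<Rightarrow> (int \<Rightarrow> complex) \<Rightarrow> real" where
  "L2F F f = L2_set (\<lambda>n. cmod (f n)) F"

lemma L2F_triangle: "L2F F (\<lambda>n. f n + g n) \<le> L2F F f + L2F F g"
proof -
  have "L2F F (\<lambda>n. f n + g n) \<le> L2_set (\<lambda>n. cmod (f n) + cmod (g n)) F"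
    unfolding L2F_def by (rule L2_set_mono) (auto simp: norm_triangle_ineq)
  also have "\<dots> \<le> L2F F f + L2F F g" unfolding L2F_def by (rule L2_set_triangle_ineq)
  finally show ?thesis .
qed

lemma L2F_le_nsq:
  assumes "\<phi> \<in> l2Z" "finite F"
  shows "L2F F \<phi> \<le> sqrt (nsq \<phi>)"
proof -
  have "infsum (\<lambda>n. (cmod (\<phi> n))\<^sup>2) F \<le> infsum (\<lambda>n. (cmod (\<phi> n))\<^sup>2) UNIV"
    by (rule infsum_mono_neutral) (use assms in \<open>auto simp: l2Z_iff\<close>)
  then show ?thesis using assms(2) by (simp add: L2F_def L2_set_def nsq_def)
qed

lemma L2F_sum: "L2F F (\<lambda>n. \<Sum>k<(K::nat). f k n) \<le> (\<Sum>k<K. L2F F (f k))"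
proof (induction K)
  case 0 then show ?case by (simp add: L2F_def L2_set_def)
next
  case (Suc K)
  have "L2F F (\<lambda>n. \<Sum>k<Suc K. f k n) = L2F F (\<lambda>n. (\<Sum>k<K. f k n) + f K n)" by simp
  also have "\<dots> \<le> L2F F (\<lambda>n. \<Sum>k<K. f k n) + L2F F (f K)" by (rule L2F_triangle)
  also have "\<dots> \<le> (\<Sum>k<Suc K. L2F F (f k))" using Suc by simp
  finally show ?case .
qed

locale neumann =
  fixes a b c :: "int \<Rightarrow> complex" and q :: real
  assumes q: "0 \<le> q" "q < 1"
  and contr: "\<And>\<phi>. \<phi> \<in> l2Z \<Longrightarrow> loc a b c \<phi> \<in> l2Z \<and> nsq (loc a b c \<phi>) \<le> q\<^sup>2 * nsq \<phi>"
begin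

abbreviation "N \<equiv> loc a b c"

lemma pow_l2:
  assumes "\<phi> \<in> l2Z"
  shows "(N ^^ k) \<phi> \<in> l2Z \<and> nsq ((N ^^ k) \<phi>) \<le> (q ^ k)\<^sup>2 * nsq \<phi>"
proof (induction k)
  case 0 then show ?case using assms by simp
next
  case (Suc k)
  then have "N ((N ^^ k) \<phi>) \<in> l2Z" "nsq (N ((N ^^ k) \<phi>)) \<le> q\<^sup>2 * nsq ((N ^^ k) \<phi>)"
    using contr by auto
  moreover have "q\<^sup>2 * nsq ((N ^^ k) \<phi>) \<le> q\<^sup>2 * ((q ^ k)\<^sup>2 * nsq \<phi>)"
    using Suc by (intro mult_left_mono) auto
  ultimately show ?case by (simp add: power_mult_distrib power2_eq_square algebra_simps)
qed

lemma pow_pt: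
  assumes "\<phi> \<in> l2Z"
  shows "cmod ((N ^^ k) \<phi> n) \<le> q ^ k * sqrt (nsq \<phi>)"
proof -
  have 1: "(cmod ((N ^^ k) \<phi> n))\<^sup>2 \<le> nsq ((N ^^ k) \<phi>)"
    by (rule l2_single) (use pow_l2[OF assms] in blast)
  have 2: "nsq ((N ^^ k) \<phi>) \<le> (q ^ k)\<^sup>2 * nsq \<phi>" using pow_l2[OF assms] by blast
  have 3: "(q ^ k)\<^sup>2 * nsq \<phi> = (q ^ k * sqrt (nsq \<phi>))\<^sup>2"
    by (simp only: power_mult_distrib real_sqrt_pow2[OF nsq_nonneg])
  have 4: "0 \<le> q ^ k * sqrt (nsq \<phi>)" by (intro mult_nonneg_nonneg zero_le_power real_sqrt_ge_zero nsq_nonneg q(1))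
  show ?thesis by (rule power2_le_imp_le) (use 1 2 3 4 in linarith)+
qed

lemma pow_summable:
  assumes "\<phi> \<in> l2Z"
  shows "summable (\<lambda>k. (N ^^ k) \<phi> n)"
proof (rule summable_comparison_test)
  show "\<exists>N0. \<forall>k\<ge>N0. norm ((N ^^ k) \<phi> n) \<le> q ^ k * sqrt (nsq \<phi>)"
    using pow_pt[OF assms] by auto
  show "summable (\<lambda>k. q ^ k * sqrt (nsq \<phi>))"
    using q by (intro summable_mult2 summable_geometric) auto
qed

lemma pow_tendsto:
  assumes "\<phi> \<in> l2Z"
  shows "(\<lambda>k. (N ^^ k) \<phi> n) \<longlonglongrightarrow> 0"
  using summable_LIMSEQ_zero[OF pow_summable[OF assms]] .

definition Sn :: "(int \<Rightarrow> complex) \<Rightarrow> (int \<Rightarrow> complex)" where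
  "Sn \<psi> = (\<lambda>n. \<Sum>k. (N ^^ k) \<psi> n)"

lemma S_l2:
  assumes "\<psi> \<in> l2Z"
  shows "Sn \<psi> \<in> l2Z" "nsq (Sn \<psi>) \<le> nsq \<psi> / (1 - q)\<^sup>2"
proof -
  let ?B = "sqrt (nsq \<psi>) / (1 - q)"
  have B: "L2F F (Sn \<psi>) \<le> ?B" if F: "finite F" for F
  proof -
    have part: "L2F F (\<lambda>n. \<Sum>k<K. (N ^^ k) \<psi> n) \<le> ?B" for K
    proof -
      have "L2F F (\<lambda>n. \<Sum>k<K. (N ^^ k) \<psi> n) \<le> (\<Sum>k<K. L2F F ((N ^^ k) \<psi>))" by (rule L2F_sum)
      also have "\<dots> \<le> (\<Sum>k<K. q ^ k * sqrt (nsq \<psi>))"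
      proof (rule sum_mono)
        fix k
        have "L2F F ((N ^^ k) \<psi>) \<le> sqrt (nsq ((N ^^ k) \<psi>))"
          using L2F_le_nsq pow_l2[OF assms] F by auto
        also have "\<dots> \<le> sqrt ((q ^ k)\<^sup>2 * nsq \<psi>)" using pow_l2[OF assms, of k] by auto
        also have "\<dots> = q ^ k * sqrt (nsq \<psi>)" using q by (simp add: real_sqrt_mult)
        finally show "L2F F ((N ^^ k) \<psi>) \<le> q ^ k * sqrt (nsq \<psi>)" .
      qed
      also have "\<dots> = (\<Sum>k<K. q ^ k) * sqrt (nsq \<psi>)" by (simp add: sum_distrib_right)
      also have "\<dots> \<le> (1 / (1 - q)) * sqrt (nsq \<psi>)"
      proof (rule mult_right_mono)
        have "(\<Sum>k<K. q ^ k) \<le> (\<Sum>k. q ^ k)"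
          using q by (intro sum_le_suminf summable_geometric) auto
        then show "(\<Sum>k<K. q ^ k) \<le> 1 / (1 - q)" using q suminf_geometric[of q] by auto
      qed (simp add: nsq_nonneg)
      finally show ?thesis using nsq_nonneg[of \<psi>] by simp
    qed
    have lim: "(\<lambda>K. L2F F (\<lambda>n. \<Sum>k<K. (N ^^ k) \<psi> n)) \<longlonglongrightarrow> L2F F (Sn \<psi>)"
      unfolding L2F_def L2_set_def Sn_def
      by (intro tendsto_intros summable_LIMSEQ pow_summable[OF assms])
    show ?thesis by (rule LIMSEQ_le_const2[OF lim]) (use part in auto)
  qed
  have "(\<Sum>n\<in>F. (cmod (Sn \<psi> n))\<^sup>2) \<le> nsq \<psi> / (1 - q)\<^sup>2" if "finite F" for F
  proof -
    have "(\<Sum>n\<in>F. (cmod (Sn \<psi> n))\<^sup>2) = (L2F F (Sn \<psi>))\<^sup>2"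
      unfolding L2F_def L2_set_def by (simp add: sum_nonneg)
    also have "\<dots> \<le> ?B\<^sup>2" using B[OF that] by (intro power_mono) (auto simp: L2F_def L2_set_def intro!: sum_nonneg)
    also have "\<dots> = nsq \<psi> / (1 - q)\<^sup>2" using nsq_nonneg[of \<psi>] by (simp add: power_divide)
    finally show ?thesis .
  qed
  then show "Sn \<psi> \<in> l2Z" "nsq (Sn \<psi>) \<le> nsq \<psi> / (1 - q)\<^sup>2" using l2_finite_bound by blast+
qed

lemma S_right:
  assumes "\<psi> \<in> l2Z"
  shows "Sn \<psi> n - N (Sn \<psi>) n = \<psi> n"
proof -
  have s: "summable (\<lambda>k. (N ^^ k) \<psi> m)" for m using pow_summable[OF assms] .
  have "N (Sn \<psi>) n = a n * (\<Sum>k. (N ^^ k) \<psi> (n - 1)) + b n * (\<Sum>k. (N ^^ k) \<psi> n) + c n * (\<Sum>k. (N ^^ k) \<psi> (n + 1))"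
    by (simp add: loc_def Sn_def)
  also have "\<dots> = (\<Sum>k. a n * (N ^^ k) \<psi> (n - 1) + b n * (N ^^ k) \<psi> n + c n * (N ^^ k) \<psi> (n + 1))"
    using s by (simp add: suminf_add[symmetric] suminf_mult[symmetric] summable_add summable_mult)
  also have "\<dots> = (\<Sum>k. (N ^^ Suc k) \<psi> n)" by (simp add: loc_def)
  finally have e: "N (Sn \<psi>) n = (\<Sum>k. (N ^^ Suc k) \<psi> n)" .
  have "Sn \<psi> n = (\<Sum>k. (N ^^ Suc k) \<psi> n) + (N ^^ 0) \<psi> n"
    unfolding Sn_def using suminf_split_initial_segment[OF s[of n], of 1] by simp
  then show ?thesis using e by simp
qed

lemma S_left:
  assumes "\<phi> \<in> l2Z"
  shows "Sn (\<lambda>n. \<phi> n - N \<phi> n) = \<phi>"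
proof
  fix n
  have "(\<lambda>k. (N ^^ k) \<phi> n - (N ^^ Suc k) \<phi> n) sums ((N ^^ 0) \<phi> n - 0)"
    by (rule telescope_sums') (rule pow_tendsto[OF assms])
  moreover have "(N ^^ k) (\<lambda>n. \<phi> n - N \<phi> n) n = (N ^^ k) \<phi> n - (N ^^ Suc k) \<phi> n" for k
    by (simp add: locpow_diff funpow_swap1)
  ultimately show "Sn (\<lambda>n. \<phi> n - N \<phi> n) n = \<phi> n"
    unfolding Sn_def by (simp add: sums_iff)
qed

end

definition Mop :: "(int \<Rightarrow> real) \<Rightarrow> (int \<Rightarrow> complex) \<Rightarrow> (int \<Rightarrow> complex)" where
  "Mop d \<phi> = (\<lambda>n. \<phi> (n + 1) + \<phi> (n - 1) + complex_of_real (d n) * \<phi> n)"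

lemma l2_sq_shift:
  assumes "\<phi> \<in> l2Z"
  shows "(\<lambda>n. (cmod (\<phi> (n + k)))\<^sup>2) summable_on UNIV" "infsum (\<lambda>n. (cmod (\<phi> (n + k)))\<^sup>2) UNIV = nsq \<phi>"
  using l2_shift[OF assms, of k] by (auto simp: l2Z_iff nsq_def)

lemma l2_sq_shift':
  assumes "\<phi> \<in> l2Z"
  shows "(\<lambda>n. (cmod (\<phi> (n - k)))\<^sup>2) summable_on UNIV" "infsum (\<lambda>n. (cmod (\<phi> (n - k)))\<^sup>2) UNIV = nsq \<phi>"
  using l2_shift'[OF assms, of k] by (auto simp: l2Z_iff nsq_def)

lemma l2_sq:
  assumes "\<phi> \<in> l2Z"
  shows "(\<lambda>n. (cmod (\<phi> n))\<^sup>2) summable_on UNIV" "infsum (\<lambda>n. (cmod (\<phi> n))\<^sup>2) UNIV = nsq \<phi>"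
  using assms by (auto simp: l2Z_iff nsq_def)

lemma Mop_l2:
  assumes "\<phi> \<in> l2Z" "\<And>n. \<bar>d n\<bar> \<le> D"
  shows "Mop d \<phi> \<in> l2Z" "nsq (Mop d \<phi>) \<le> 3 * (2 + D\<^sup>2) * nsq \<phi>"
proof -
  let ?g = "\<lambda>n. 3 * ((cmod (\<phi> (n + 1)))\<^sup>2 + (cmod (\<phi> (n - 1)))\<^sup>2 + D\<^sup>2 * (cmod (\<phi> n))\<^sup>2)"
  have s1: "(\<lambda>n. (cmod (\<phi> (n + 1)))\<^sup>2 + (cmod (\<phi> (n - 1)))\<^sup>2) summable_on UNIV"
    by (intro summable_on_add l2_sq_shift l2_sq_shift' assms)
  have s2: "(\<lambda>n. D\<^sup>2 * (cmod (\<phi> n))\<^sup>2) summable_on UNIV"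
    by (intro summable_on_cmult_right l2_sq assms)
  have sg: "?g summable_on UNIV"
    by (intro summable_on_cmult_right summable_on_add s1 s2)
  have ig: "infsum ?g UNIV = 3 * (2 + D\<^sup>2) * nsq \<phi>"
    using infsum_cmult_right[OF summable_on_add[OF s1 s2], of 3] infsum_add[OF s1 s2]
      infsum_add[OF l2_sq_shift(1)[OF assms(1), of 1] l2_sq_shift'(1)[OF assms(1), of 1]]
      infsum_cmult_right[OF l2_sq(1)[OF assms(1)], of "D\<^sup>2"]
      l2_sq_shift(2)[OF assms(1), of 1] l2_sq_shift'(2)[OF assms(1), of 1] l2_sq(2)[OF assms(1)]
    by (simp add: algebra_simps)
  have pt: "(cmod (Mop d \<phi> n))\<^sup>2 \<le> ?g n" for n
  proof -
    have "(cmod (Mop d \<phi> n))\<^sup>2 \<le> 3 * ((cmod (\<phi> (n + 1)))\<^sup>2 + (cmod (\<phi> (n - 1)))\<^sup>2 + (cmod (complex_of_real (d n) * \<phi> n))\<^sup>2)"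
      unfolding Mop_def by (rule cmod3_sq)
    moreover have "(cmod (complex_of_real (d n) * \<phi> n))\<^sup>2 \<le> D\<^sup>2 * (cmod (\<phi> n))\<^sup>2"
    proof -
      have "(cmod (complex_of_real (d n) * \<phi> n))\<^sup>2 = (d n)\<^sup>2 * (cmod (\<phi> n))\<^sup>2"
        by (simp add: norm_mult power_mult_distrib)
      moreover have "(d n)\<^sup>2 \<le> D\<^sup>2" using assms(2)[of n] by (metis abs_le_square_iff abs_ge_zero order_trans abs_of_nonneg)
      ultimately show ?thesis by (simp add: mult_right_mono)
    qed
    ultimately show ?thesis by simp
  qed
  show "Mop d \<phi> \<in> l2Z" unfolding l2Z_iff
    by (rule summable_on_comparison_test[OF sg]) (use pt in auto)
  then have "nsq (Mop d \<phi>) \<le> infsum ?g UNIV"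
    unfolding nsq_def by (intro infsum_mono sg pt) (auto simp: l2Z_iff)
  then show "nsq (Mop d \<phi>) \<le> 3 * (2 + D\<^sup>2) * nsq \<phi>" using ig by simp
qed

lemma amgm:
  fixes x y w1 w2 :: real
  assumes "0 \<le> w1" "0 \<le> w2" "1 \<le> w1 * w2"
  shows "2 * x * y \<le> w1 * x\<^sup>2 + w2 * y\<^sup>2"
proof -
  have w1: "w1 > 0" using assms by (metis less_eq_real_def mult_zero_left not_one_le_zero)
  have "0 \<le> (w1 * x - y)\<^sup>2 + (w1 * w2 - 1) * y\<^sup>2" using assms by simp
  also have "\<dots> = w1 * (w1 * x\<^sup>2 + w2 * y\<^sup>2 - 2 * x * y)" by (simp add: power2_eq_square algebra_simps)
  finally have "0 \<le> w1 * (w1 * x\<^sup>2 + w2 * y\<^sup>2 - 2 * x * y)" .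
  then show ?thesis using w1 by (simp add: zero_le_mult_iff)
qed

lemma Re_cnj_sym: "Re (cnj a * b) = Re (cnj b * a)"
  by (simp add: algebra_simps)

lemma abs_Re_cnj: "\<bar>Re (cnj a * b)\<bar> \<le> cmod a * cmod b"
  by (metis abs_Re_le_cmod complex_mod_cnj norm_mult)

lemma edge_ineq:
  fixes s t w1 w2 :: real
  assumes "s = 1 \<or> s = -1" "t = 1 \<or> t = -1" "0 \<le> w1" "0 \<le> w2" "s = t \<Longrightarrow> 1 \<le> w1 * w2"
  shows "- (w1 * (cmod a)\<^sup>2 + w2 * (cmod b)\<^sup>2) \<le> (s + t) * Re (cnj a * b)"
proof (cases "s = t")
  case True
  have "2 * (cmod a) * (cmod b) \<le> w1 * (cmod a)\<^sup>2 + w2 * (cmod b)\<^sup>2"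
    using amgm assms True by blast
  moreover have "\<bar>(s + t) * Re (cnj a * b)\<bar> \<le> 2 * (cmod a * cmod b)"
    using abs_Re_cnj[of a b] assms True by (auto simp: abs_mult)
  ultimately show ?thesis by (simp add: abs_le_iff)
next
  case False
  then have "s + t = 0" using assms by auto
  moreover have "0 \<le> w1 * (cmod a)\<^sup>2" "0 \<le> w2 * (cmod b)\<^sup>2" using assms by simp_all
  ultimately show ?thesis by simp
qed

lemma Re_decomp:
  "Re (cnj a * (complex_of_real s * (b + c + complex_of_real d * a))) =
     s * d * (cmod a)\<^sup>2 + s * Re (cnj a * b) + s * Re (cnj a * c)"
  by (simp only: cmod_power2) (simp add: algebra_simps power2_eq_square)

lemma norm_expand:
  "(cmod (a - complex_of_real r * m))\<^sup>2 = (cmod a)\<^sup>2 - 2 * r * Re (cnj a * m) + r\<^sup>2 * (cmod m)\<^sup>2"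
  by (simp only: cmod_power2) (simp add: algebra_simps power2_eq_square)


lemma sgn_cases: "(x::real) \<noteq> 0 \<Longrightarrow> sgn x = 1 \<or> sgn x = -1"
  by (simp add: sgn_if)

lemma Re_lower:
  fixes d :: "int \<Rightarrow> real" and \<delta> D :: real
  assumes \<phi>: "\<phi> \<in> l2Z" and \<delta>: "\<delta> > 0" and lo: "\<And>n. 2*\<delta> \<le> \<bar>d n\<bar>" and hi: "\<And>n. \<bar>d n\<bar> \<le> D"
  and edge: "\<And>n. d n * d (n+1) > 0 \<Longrightarrow> 1 \<le> (\<bar>d n\<bar>/2 - \<delta>) * (\<bar>d (n+1)\<bar>/2 - \<delta>)"
  shows "(\<lambda>n. Re (cnj (\<phi> n) * (complex_of_real (sgn (d n)) * Mop d \<phi> n))) summable_on UNIV"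
    "2*\<delta>*nsq \<phi> \<le> infsum (\<lambda>n. Re (cnj (\<phi> n) * (complex_of_real (sgn (d n)) * Mop d \<phi> n))) UNIV"
proof -
  define \<sigma> where "\<sigma> n = sgn (d n)" for n
  define x where "x n = (cmod (\<phi> n))\<^sup>2" for n
  define A where "A n = \<bar>d n\<bar> * x n" for n
  define P where "P n = \<sigma> n * Re (cnj (\<phi> n) * \<phi> (n+1))" for n
  define Q where "Q n = \<sigma> n * Re (cnj (\<phi> n) * \<phi> (n-1))" for n
  define P' where "P' n = \<sigma> (n+1) * Re (cnj (\<phi> n) * \<phi> (n+1))" for n
  define I where "I n = Re (cnj (\<phi> n) * (complex_of_real (\<sigma> n) * Mop d \<phi> n))" for n
  define w where "w n = \<bar>d n\<bar>/2 - \<delta>" for n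
  define g where "g n = w n * x n" for n
  have dnz: "d n \<noteq> 0" for n using lo[of n] \<delta> by auto
  have \<sigma>1: "\<sigma> n = 1 \<or> \<sigma> n = -1" for n unfolding \<sigma>_def using sgn_cases dnz by blast
  have \<sigma>d: "\<sigma> n * d n = \<bar>d n\<bar>" for n by (simp add: \<sigma>_def sgn_if)
  have \<sigma>abs: "\<bar>\<sigma> n\<bar> = 1" for n using \<sigma>1[of n] by auto
  have w0: "0 \<le> w n" for n using lo[of n] by (simp add: w_def)
  have x0: "0 \<le> x n" for n by (simp add: x_def)
  have sx: "x summable_on UNIV" unfolding x_def using l2_sq(1)[OF \<phi>] .
  have sx1: "(\<lambda>n. x (n + 1)) summable_on UNIV" unfolding x_def using l2_sq_shift(1)[OF \<phi>] .
  have sx1': "(\<lambda>n. x (n - 1)) summable_on UNIV" unfolding x_def using l2_sq_shift'(1)[OF \<phi>] .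
  have ix: "infsum x UNIV = nsq \<phi>" unfolding x_def using l2_sq(2)[OF \<phi>] .
  have prod_le: "cmod a * cmod b \<le> (cmod a)\<^sup>2 + (cmod b)\<^sup>2" for a b :: complex
  proof -
    have h0: "0 \<le> cmod a * cmod b" by simp
    have h: "2 * cmod a * cmod b \<le> (cmod a)\<^sup>2 + (cmod b)\<^sup>2" using amgm[of 1 1 "cmod a" "cmod b"] by simp
    show ?thesis using h h0 by linarith
  qed
  have I_eq: "I n = A n + P n + Q n" for n
    unfolding I_def Mop_def A_def P_def Q_def x_def
    using Re_decomp[of "\<phi> n" "\<sigma> n" "\<phi> (n+1)" "\<phi> (n-1)" "d n"] \<sigma>d[of n]
    by (simp add: algebra_simps)
  have sA: "A summable_on UNIV"
    by (rule rsum_cmp[of "\<lambda>n. D * x n"]) (use sx hi x0 in \<open>auto simp: A_def abs_mult intro!: summable_on_cmult_right mult_right_mono\<close>)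
  have bP: "\<bar>P n\<bar> \<le> x n + x (n+1)" for n
    unfolding P_def x_def abs_mult \<sigma>abs using abs_Re_cnj[of "\<phi> n" "\<phi> (n+1)"] prod_le[of "\<phi> n" "\<phi> (n+1)"] by simp
  have bP': "\<bar>P' n\<bar> \<le> x n + x (n+1)" for n
    unfolding P'_def x_def abs_mult \<sigma>abs using abs_Re_cnj[of "\<phi> n" "\<phi> (n+1)"] prod_le[of "\<phi> n" "\<phi> (n+1)"] by simp
  have bQ: "\<bar>Q n\<bar> \<le> x n + x (n-1)" for n
    unfolding Q_def x_def abs_mult \<sigma>abs using abs_Re_cnj[of "\<phi> n" "\<phi> (n-1)"] prod_le[of "\<phi> n" "\<phi> (n-1)"] by simp
  have sP: "P summable_on UNIV" by (rule rsum_cmp[OF summable_on_add[OF sx sx1]]) (use bP in auto)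
  have sP': "P' summable_on UNIV" by (rule rsum_cmp[OF summable_on_add[OF sx sx1]]) (use bP' in auto)
  have sQ: "Q summable_on UNIV" by (rule rsum_cmp[OF summable_on_add[OF sx sx1']]) (use bQ in auto)
  have sAP: "(\<lambda>n. A n + P n) summable_on UNIV" using summable_on_add[OF sA sP] .
  have sI: "I summable_on UNIV" unfolding I_eq using summable_on_add[OF sAP sQ] .
  have Idef': "(\<lambda>n. Re (cnj (\<phi> n) * (complex_of_real (sgn (d n)) * Mop d \<phi> n))) = I"
    by (intro ext) (simp only: I_def \<sigma>_def)
  show "(\<lambda>n. Re (cnj (\<phi> n) * (complex_of_real (sgn (d n)) * Mop d \<phi> n))) summable_on UNIV"
    unfolding Idef' by (rule sI)
  have QP: "Q (n+1) = P' n" for n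
    unfolding Q_def P'_def using Re_cnj_sym[of "\<phi> (n+1)" "\<phi> n"] by simp
  have iQ: "infsum Q UNIV = infsum P' UNIV"
    using rsum_shift(2)[OF sQ, of 1] QP by simp
  have sAPP: "(\<lambda>n. A n + P n + P' n) summable_on UNIV" using summable_on_add[OF sAP sP'] .
  have iI: "infsum I UNIV = infsum (\<lambda>n. A n + P n + P' n) UNIV"
  proof -
    have "infsum I UNIV = infsum (\<lambda>n. A n + P n) UNIV + infsum Q UNIV"
      unfolding I_eq using infsum_add[OF sAP sQ] .
    also have "\<dots> = infsum (\<lambda>n. A n + P n + P' n) UNIV"
      unfolding iQ using infsum_add[OF sAP sP'] by simp
    finally show ?thesis .
  qed
  have wD: "w n \<le> D" for n using hi[of n] lo[of n] \<delta> by (simp add: w_def)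
  have sg: "g summable_on UNIV"
  proof (rule rsum_cmp[of "\<lambda>n. D * x n"])
    show "(\<lambda>n. D * x n) summable_on UNIV" by (intro summable_on_cmult_right sx)
    fix n
    have "\<bar>g n\<bar> = w n * x n" using w0[of n] x0[of n] by (simp add: g_def abs_mult)
    also have "\<dots> \<le> D * x n" by (rule mult_right_mono[OF wD x0])
    finally show "\<bar>g n\<bar> \<le> D * x n" .
  qed
  have sg1: "(\<lambda>n. g (n+1)) summable_on UNIV" using rsum_shift(1)[OF sg] .
  have pt: "2*\<delta>*x n + g n - g (n+1) \<le> A n + P n + P' n" for n
  proof -
    have "- (w n * (cmod (\<phi> n))\<^sup>2 + w (n+1) * (cmod (\<phi> (n+1)))\<^sup>2) \<le> (\<sigma> n + \<sigma> (n+1)) * Re (cnj (\<phi> n) * \<phi> (n+1))"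
    proof (rule edge_ineq[OF \<sigma>1 \<sigma>1 w0 w0])
      assume "\<sigma> n = \<sigma> (n+1)"
      then have "d n * d (n+1) > 0" using dnz[of n] dnz[of "n+1"] unfolding \<sigma>_def
        by (auto simp: sgn_if zero_less_mult_iff split: if_splits)
      then show "1 \<le> w n * w (n+1)" unfolding w_def by (rule edge)
    qed
    then show ?thesis unfolding A_def P_def P'_def g_def x_def w_def by (simp add: algebra_simps)
  qed
  have s2: "(\<lambda>n. 2*\<delta>*x n + g n) summable_on UNIV" by (intro summable_on_add summable_on_cmult_right sx sg)
  have "infsum (\<lambda>n. 2*\<delta>*x n + g n - g (n+1)) UNIV = 2*\<delta>*nsq \<phi>"
  proof -
    have "infsum (\<lambda>n. 2*\<delta>*x n + g n - g (n+1)) UNIV = infsum (\<lambda>n. 2*\<delta>*x n + g n) UNIV - infsum (\<lambda>n. g (n+1)) UNIV"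
      using rsum_diff(2)[OF s2 sg1] .
    also have "\<dots> = 2*\<delta>*nsq \<phi>"
      using infsum_add[OF summable_on_cmult_right[OF sx, of "2*\<delta>"] sg] infsum_cmult_right[OF sx, of "2*\<delta>"]
        rsum_shift(2)[OF sg, of 1] ix by simp
    finally show ?thesis .
  qed
  moreover have "infsum (\<lambda>n. 2*\<delta>*x n + g n - g (n+1)) UNIV \<le> infsum (\<lambda>n. A n + P n + P' n) UNIV"
    by (rule infsum_mono[OF rsum_diff(1)[OF s2 sg1] sAPP pt])
  ultimately show "2*\<delta>*nsq \<phi> \<le> infsum (\<lambda>n. Re (cnj (\<phi> n) * (complex_of_real (sgn (d n)) * Mop d \<phi> n))) UNIV"
    unfolding Idef' using iI by simp
qed


lemma gap_not_spec:
  fixes V :: "int \<Rightarrow> real" and E \<delta> D :: real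
  assumes \<delta>: "\<delta> > 0" and lo: "\<And>n. 2*\<delta> \<le> \<bar>V n - E\<bar>" and hi: "\<And>n. \<bar>V n - E\<bar> \<le> D"
  and edge: "\<And>n. (V n - E) * (V (n+1) - E) > 0 \<Longrightarrow> 1 \<le> (\<bar>V n - E\<bar>/2 - \<delta>) * (\<bar>V (n+1) - E\<bar>/2 - \<delta>)"
  shows "E \<notin> schrod_spectrum V"
proof -
  define d where "d n = V n - E" for n
  define \<sigma> where "\<sigma> n = sgn (d n)" for n
  define K where "K = 3 * (2 + D\<^sup>2)"
  define t where "t = 2*\<delta>/K"
  define r where "r = 1 - 4*\<delta>\<^sup>2/K"
  define q where "q = sqrt r"
  have lo': "\<And>n. 2*\<delta> \<le> \<bar>d n\<bar>" and hi': "\<And>n. \<bar>d n\<bar> \<le> D" using lo hi by (auto simp: d_def)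
  have edge': "\<And>n. d n * d (n+1) > 0 \<Longrightarrow> 1 \<le> (\<bar>d n\<bar>/2 - \<delta>) * (\<bar>d (n+1)\<bar>/2 - \<delta>)"
    using edge by (auto simp: d_def)
  have D2: "2*\<delta> \<le> D" using lo'[of 0] hi'[of 0] by linarith
  have K: "K > 0" unfolding K_def by (simp add: add_pos_nonneg)
  have "(2*\<delta>)\<^sup>2 \<le> D\<^sup>2" using D2 \<delta> by (intro power_mono) auto
  then have "4*\<delta>\<^sup>2 \<le> D\<^sup>2" by (simp add: power_mult_distrib)
  moreover have "K = 6 + 3 * D\<^sup>2" unfolding K_def by simp
  ultimately have K4: "4*\<delta>\<^sup>2 \<le> K" using zero_le_power2[of D] by linarith
  have t: "t > 0" unfolding t_def using \<delta> K by simp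
  have r0: "0 \<le> r" unfolding r_def using K4 K by simp
  have r1: "r < 1" unfolding r_def using \<delta> K by simp
  have q0: "0 \<le> q" and q1: "q < 1" and q2: "q\<^sup>2 = r" using r0 r1 by (auto simp: q_def)
  have \<sigma>abs: "\<bar>\<sigma> n\<bar> = 1" for n
    using lo'[of n] \<delta> by (auto simp: \<sigma>_def sgn_if)
  have \<sigma>sq: "(\<sigma> n)\<^sup>2 = 1" for n using \<sigma>abs[of n] by (metis abs_power2 power2_abs power_one)
  have t\<sigma>: "t * \<sigma> n \<noteq> 0" for n using t \<sigma>abs[of n] by auto
  define a where "a n = complex_of_real (- t * \<sigma> n)" for n
  define b where "b n = complex_of_real (1 - t * \<sigma> n * d n)" for n
  have locN: "loc a b a \<phi> = (\<lambda>n. \<phi> n - complex_of_real (t * \<sigma> n) * Mop d \<phi> n)" for \<phi>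
    by (simp add: loc_def Mop_def fun_eq_iff a_def b_def algebra_simps)
  have mul_l2: "(\<lambda>n. complex_of_real (t * \<sigma> n) * \<psi> n) \<in> l2Z \<and>
      nsq (\<lambda>n. complex_of_real (t * \<sigma> n) * \<psi> n) = t\<^sup>2 * nsq \<psi>" if \<psi>: "\<psi> \<in> l2Z" for \<psi>
  proof -
    have pt: "(cmod (complex_of_real (t * \<sigma> n) * \<psi> n))\<^sup>2 = t\<^sup>2 * (cmod (\<psi> n))\<^sup>2" for n
      using \<sigma>sq[of n] by (simp add: norm_mult power_mult_distrib)
    show ?thesis unfolding l2Z_iff nsq_def pt
      using summable_on_cmult_right[OF l2_sq(1)[OF \<psi>], of "t\<^sup>2"] infsum_cmult_right[OF l2_sq(1)[OF \<psi>], of "t\<^sup>2"]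
        l2_sq(2)[OF \<psi>] by simp
  qed
  have contr: "loc a b a \<phi> \<in> l2Z \<and> nsq (loc a b a \<phi>) \<le> q\<^sup>2 * nsq \<phi>" if \<phi>: "\<phi> \<in> l2Z" for \<phi>
  proof -
    define M where "M = Mop d \<phi>"
    define I where "I n = Re (cnj (\<phi> n) * (complex_of_real (sgn (d n)) * M n))" for n
    have M: "M \<in> l2Z" "nsq M \<le> K * nsq \<phi>" using Mop_l2[OF \<phi> hi'] by (auto simp: M_def K_def)
    have sI: "I summable_on UNIV" and iI: "2*\<delta>*nsq \<phi> \<le> infsum I UNIV"
      using Re_lower[of \<phi> \<delta> d D, OF \<phi> \<delta> lo' hi' edge'] unfolding I_def M_def by auto
    have pt: "(cmod (loc a b a \<phi> n))\<^sup>2 = (cmod (\<phi> n))\<^sup>2 - 2 * t * I n + t\<^sup>2 * (cmod (M n))\<^sup>2" for n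
    proof -
      have "(cmod (loc a b a \<phi> n))\<^sup>2 = (cmod (\<phi> n))\<^sup>2 - 2 * (t * \<sigma> n) * Re (cnj (\<phi> n) * M n) + (t * \<sigma> n)\<^sup>2 * (cmod (M n))\<^sup>2"
        unfolding locN M_def by (rule norm_expand)
      moreover have "I n = \<sigma> n * Re (cnj (\<phi> n) * M n)" unfolding I_def \<sigma>_def by (simp add: algebra_simps)
      ultimately show ?thesis using \<sigma>sq[of n] by (simp add: power_mult_distrib algebra_simps)
    qed
    have s1: "(\<lambda>n. (cmod (\<phi> n))\<^sup>2 - 2 * t * I n) summable_on UNIV"
      by (intro rsum_diff(1) l2_sq(1)[OF \<phi>] summable_on_cmult_right sI)
    have s2: "(\<lambda>n. t\<^sup>2 * (cmod (M n))\<^sup>2) summable_on UNIV"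
      by (intro summable_on_cmult_right l2_sq(1)[OF M(1)])
    have "infsum (\<lambda>n. (cmod (loc a b a \<phi> n))\<^sup>2) UNIV = nsq \<phi> - 2 * t * infsum I UNIV + t\<^sup>2 * nsq M"
      unfolding pt
      using infsum_add[OF s1 s2] rsum_diff(2)[OF l2_sq(1)[OF \<phi>] summable_on_cmult_right[OF sI, of "2*t"]]
        infsum_cmult_right[OF sI, of "2*t"] infsum_cmult_right[OF l2_sq(1)[OF M(1)], of "t\<^sup>2"]
        l2_sq(2)[OF \<phi>] l2_sq(2)[OF M(1)] by simp
    also have "\<dots> \<le> nsq \<phi> - 2 * t * (2*\<delta>*nsq \<phi>) + t\<^sup>2 * (K * nsq \<phi>)"
      using iI M(2) t by (intro add_mono diff_mono mult_left_mono) auto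
    also have "\<dots> = r * nsq \<phi>" unfolding r_def t_def using K by (simp add: field_simps power2_eq_square)
    finally have "infsum (\<lambda>n. (cmod (loc a b a \<phi> n))\<^sup>2) UNIV \<le> q\<^sup>2 * nsq \<phi>" using q2 by simp
    moreover have "loc a b a \<phi> \<in> l2Z" unfolding l2Z_iff pt using summable_on_add[OF s1 s2] by simp
    ultimately show ?thesis by (simp add: nsq_def)
  qed
  interpret neumann a b a q by unfold_locales (use q0 q1 contr in auto)
  define G where "G \<psi> = Sn (\<lambda>n. complex_of_real (t * \<sigma> n) * \<psi> n)" for \<psi>
  have schM: "(\<lambda>n. schrod V \<phi> n - complex_of_real E * \<phi> n) = Mop d \<phi>" for \<phi>
    by (simp add: schrod_def Mop_def d_def fun_eq_iff algebra_simps)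
  have Gl2: "G \<psi> \<in> l2Z" if "\<psi> \<in> l2Z" for \<psi> unfolding G_def using S_l2(1) mul_l2 that by blast
  have Gb: "l2norm (G \<psi>) \<le> t / (1 - q) * l2norm \<psi>" if \<psi>: "\<psi> \<in> l2Z" for \<psi>
  proof -
    have "nsq (G \<psi>) \<le> t\<^sup>2 * nsq \<psi> / (1 - q)\<^sup>2" unfolding G_def using S_l2(2) mul_l2[OF \<psi>] by metis
    then have "sqrt (nsq (G \<psi>)) \<le> sqrt ((t / (1 - q))\<^sup>2 * nsq \<psi>)" by (simp add: power_divide)
    also have "\<dots> = t / (1 - q) * sqrt (nsq \<psi>)" using t q1 by (simp add: real_sqrt_mult)
    finally show ?thesis by (simp add: l2norm_nsq)
  qed
  have Gleft: "G (\<lambda>n. schrod V \<phi> n - complex_of_real E * \<phi> n) = \<phi>" if \<phi>: "\<phi> \<in> l2Z" for \<phi>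
  proof -
    have "(\<lambda>n. complex_of_real (t * \<sigma> n) * Mop d \<phi> n) = (\<lambda>n. \<phi> n - loc a b a \<phi> n)"
      unfolding locN by simp
    then show ?thesis unfolding schM G_def using S_left[OF \<phi>] by simp
  qed
  have Gright: "(\<lambda>n. schrod V (G \<psi>) n - complex_of_real E * G \<psi> n) = \<psi>" if \<psi>: "\<psi> \<in> l2Z" for \<psi>
  proof
    fix n
    define ch where "ch = (\<lambda>n. complex_of_real (t * \<sigma> n) * \<psi> n)"
    have "Sn ch n - loc a b a (Sn ch) n = ch n" using S_right mul_l2[OF \<psi>] unfolding ch_def by blast
    then have "complex_of_real (t * \<sigma> n) * Mop d (Sn ch) n = complex_of_real (t * \<sigma> n) * \<psi> n"
      unfolding locN ch_def by simp
    then have "Mop d (Sn ch) n = \<psi> n" using t\<sigma>[of n] by simp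
    then show "schrod V (G \<psi>) n - complex_of_real E * G \<psi> n = \<psi> n"
      using fun_cong[OF schM[of "G \<psi>"], of n] unfolding G_def ch_def by simp
  qed
  show ?thesis unfolding schrod_spectrum_def
    using Gl2 Gb Gleft Gright by blast
qed

lemma unit_root:
  fixes c :: real
  assumes "-1 \<le> c" "c \<le> 1"
  obtains z :: complex where "cmod z = 1" "z\<^sup>2 + 1 = 2 * c * z" "c = -1 \<Longrightarrow> z = -1"
proof -
  define s where "s = sqrt (1 - c\<^sup>2)"
  have "\<bar>c\<bar> \<le> 1" using assms by auto
  then have "\<bar>c\<bar>\<^sup>2 \<le> 1" by (intro power_le_one) auto
  then have c2: "c\<^sup>2 \<le> 1" by simp
  have s2: "s\<^sup>2 = 1 - c\<^sup>2" unfolding s_def using c2 by simp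
  define z where "z = Complex c s"
  have "cmod z = 1" unfolding z_def cmod_def using s2 by simp
  moreover have "z\<^sup>2 + 1 = 2 * c * z"
    unfolding z_def using s2 by (simp add: complex_eq_iff power2_eq_square algebra_simps)
  moreover have "c = -1 \<Longrightarrow> z = -1" unfolding z_def s_def by (simp add: complex_eq_iff)
  ultimately show ?thesis using that by blast
qed

definition uu :: "complex \<Rightarrow> complex \<Rightarrow> complex \<Rightarrow> nat \<Rightarrow> complex" where
  "uu \<alpha> \<beta> z j = (if even j then \<alpha> else \<beta>) * z ^ (j div 2)"

lemma uu_rec:
  assumes e1: "\<alpha> * (z + 1) = complex_of_real (E - b) * \<beta>"
    and e2: "\<beta> * (z + 1) = complex_of_real (E - a) * \<alpha> * z"
    and j: "1 \<le> j"
  shows "uu \<alpha> \<beta> z (j + 1) + uu \<alpha> \<beta> z (j - 1) + complex_of_real ((if even j then a else b) - E) * uu \<alpha> \<beta> z j = 0"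
proof (cases "even j")
  case True
  then obtain k where k: "j = 2 * k" by blast
  with j obtain k' where k': "k = Suc k'" by (cases k) auto
  have u1: "uu \<alpha> \<beta> z (j + 1) = \<beta> * z ^ k" unfolding uu_def k by simp
  have u2: "uu \<alpha> \<beta> z (j - 1) = \<beta> * z ^ k'"
  proof -
    have "j - 1 = 2 * k' + 1" using k k' by simp
    then show ?thesis unfolding uu_def by simp
  qed
  have u3: "uu \<alpha> \<beta> z j = \<alpha> * z ^ k" unfolding uu_def k by simp
  have "\<beta> * z ^ k + \<beta> * z ^ k' + complex_of_real (a - E) * (\<alpha> * z ^ k)
      = z ^ k' * (\<beta> * (z + 1) - complex_of_real (E - a) * \<alpha> * z)"
    unfolding k' by (simp add: algebra_simps)
  also have "\<dots> = 0" using e2 by simp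
  finally show ?thesis using True u1 u2 u3 by simp
next
  case False
  then obtain k where k: "j = 2 * k + 1" using oddE by blast
  have u1: "uu \<alpha> \<beta> z (j + 1) = \<alpha> * z ^ Suc k"
  proof -
    have "j + 1 = 2 * Suc k" using k by simp
    then show ?thesis unfolding uu_def by simp
  qed
  have u2: "uu \<alpha> \<beta> z (j - 1) = \<alpha> * z ^ k" unfolding uu_def k by simp
  have u3: "uu \<alpha> \<beta> z j = \<beta> * z ^ k" unfolding uu_def k by simp
  have "\<alpha> * z ^ Suc k + \<alpha> * z ^ k + complex_of_real (b - E) * (\<beta> * z ^ k)
      = z ^ k * (\<alpha> * (z + 1) - complex_of_real (E - b) * \<beta>)"
    by (simp add: algebra_simps)
  also have "\<dots> = 0" using e1 by simp
  finally show ?thesis using False u1 u2 u3 by simp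
qed

lemma uu_norm:
  assumes "cmod z = 1"
  shows "cmod (uu \<alpha> \<beta> z j) = (if even j then cmod \<alpha> else cmod \<beta>)"
  using assms by (simp add: uu_def norm_mult norm_power)

lemma uu_sum:
  assumes "cmod z = 1"
  shows "(\<Sum>j<2*L. (cmod (uu \<alpha> \<beta> z j))\<^sup>2) = real L * ((cmod \<alpha>)\<^sup>2 + (cmod \<beta>)\<^sup>2)"
proof (induction L)
  case 0 then show ?case by simp
next
  case (Suc L)
  have "{..<2 * Suc L} = insert (2*L+1) (insert (2*L) {..<2*L})" by auto
  then show ?case using Suc uu_norm[OF assms] by (simp add: algebra_simps)
qed


lemma weyl:
  fixes V :: "int \<Rightarrow> real" and a b E Vm :: real
  assumes x0: "0 \<le> (E-a)*(E-b)" and x4: "(E-a)*(E-b) \<le> 4"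
  and bnd: "\<And>n. \<bar>V n - E\<bar> \<le> Vm"
  and win: "\<And>L::nat. \<exists>m::int. \<forall>j::nat. j < 2*L \<longrightarrow> V (2*m + int j) = (if even j then a else b)"
  shows "E \<in> schrod_spectrum V"
proof (rule ccontr)
  assume "E \<notin> schrod_spectrum V"
  then obtain G C where Gb: "\<forall>\<phi>\<in>l2Z. l2norm (G \<phi>) \<le> C * l2norm \<phi>"
    and Gl: "\<forall>\<phi>\<in>l2Z. G (\<lambda>n. schrod V \<phi> n - complex_of_real E * \<phi> n) = \<phi>"
    unfolding schrod_spectrum_def by blast
  define xx where "xx = (E-a)*(E-b)"
  define c where "c = xx/2 - 1"
  have "0 \<le> xx" "xx \<le> 4" using x0 x4 by (simp_all add: xx_def)
  then have cb: "-1 \<le> c" "c \<le> 1" unfolding c_def by linarith+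
  obtain z :: complex where z1: "cmod z = 1" and zq: "z\<^sup>2 + 1 = 2*c*z" and zm: "c = -1 \<Longrightarrow> z = -1"
    using unit_root[OF cb] by blast
  define \<alpha> where "\<alpha> = (if E = b then 0 else complex_of_real (E - b))"
  define \<beta> where "\<beta> = (if E = b then 1 else z + 1)"
  have e1: "\<alpha> * (z+1) = complex_of_real (E-b) * \<beta>" by (simp add: \<alpha>_def \<beta>_def)
  have e2: "\<beta> * (z+1) = complex_of_real (E-a) * \<alpha> * z"
  proof (cases "E = b")
    case True
    then have "c = -1" by (simp add: c_def xx_def)
    then show ?thesis using zm True by (simp add: \<alpha>_def \<beta>_def)
  next
    case False
    have "(z + 1) * (z + 1) = z\<^sup>2 + 1 + 2 * z" by (simp add: power2_eq_square algebra_simps)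
    also have "\<dots> = (2 * complex_of_real c + 2) * z" unfolding zq by (simp add: algebra_simps)
    also have "2 * complex_of_real c + 2 = complex_of_real xx" unfolding c_def by simp
    also have "complex_of_real xx = complex_of_real (E-a) * complex_of_real (E-b)" unfolding xx_def by simp
    finally have "(z + 1) * (z + 1) = complex_of_real (E-a) * complex_of_real (E-b) * z" .
    then show ?thesis using False unfolding \<alpha>_def \<beta>_def by (simp add: mult.commute mult.left_commute)
  qed
  define c0 where "c0 = (cmod \<alpha>)\<^sup>2 + (cmod \<beta>)\<^sup>2"
  have c0: "0 < c0" unfolding c0_def \<alpha>_def \<beta>_def by (auto simp: add_pos_nonneg)
  define B where "B = cmod \<alpha> + cmod \<beta>"
  define Cb where "Cb = B * (2 + Vm)"
  have Vm0: "0 \<le> Vm" using bnd[of 0] by linarith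
  have B0: "0 \<le> B" by (simp add: B_def)
  have bound: "real L * c0 \<le> (\<bar>C\<bar> * (2 * Cb))\<^sup>2" if L: "L \<ge> 1" for L :: nat
  proof -
    obtain m where m: "\<And>j::nat. j < 2*L \<Longrightarrow> V (2*m + int j) = (if even j then a else b)"
      using win[of L] by blast
    define \<phi> where "\<phi> n = (if 2*m \<le> n \<and> n < 2*m + 2*int L then uu \<alpha> \<beta> z (nat (n - 2*m)) else 0)" for n
    define S where "S = (\<lambda>j. 2*m + int j) ` {..<2*L}"
    have inS: "n \<in> S" if "2*m \<le> n" "n < 2*m + 2*int L" for n
    proof -
      have "n = 2*m + int (nat (n - 2*m))" "nat (n - 2*m) < 2*L" using that by auto
      then show ?thesis unfolding S_def by blast
    qed
    have \<phi>0: "\<phi> n = 0" if "n \<notin> S" for n using inS that by (auto simp: \<phi>_def)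
    have fS: "finite S" by (simp add: S_def)
    have \<phi>l2: "\<phi> \<in> l2Z" using l2_finite_support[of S \<phi>, OF fS \<phi>0] by blast
    have "nsq \<phi> = (\<Sum>n\<in>S. (cmod (\<phi> n))\<^sup>2)" using l2_finite_support[of S \<phi>, OF fS \<phi>0] by blast
    also have "\<dots> = (\<Sum>j<2*L. (cmod (\<phi> (2*m + int j)))\<^sup>2)"
      unfolding S_def by (subst sum.reindex) (auto simp: inj_on_def)
    also have "\<dots> = (\<Sum>j<2*L. (cmod (uu \<alpha> \<beta> z j))\<^sup>2)"
      by (intro sum.cong) (auto simp: \<phi>_def)
    also have "\<dots> = real L * c0" unfolding c0_def by (rule uu_sum[OF z1])
    finally have n\<phi>: "nsq \<phi> = real L * c0" .
    define \<psi> where "\<psi> n = schrod V \<phi> n - complex_of_real E * \<phi> n" for n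
    have \<psi>e: "\<psi> n = \<phi> (n+1) + \<phi> (n-1) + complex_of_real (V n - E) * \<phi> n" for n
      by (simp add: \<psi>_def schrod_def algebra_simps)
    have \<phi>B: "cmod (\<phi> n) \<le> B" for n
      using uu_norm[OF z1] by (auto simp: \<phi>_def B_def)
    have \<psi>B: "cmod (\<psi> n) \<le> Cb" for n
    proof -
      have t1: "cmod (\<psi> n) \<le> cmod (\<phi> (n+1) + \<phi> (n-1)) + cmod (complex_of_real (V n - E) * \<phi> n)"
        unfolding \<psi>e by (rule norm_triangle_ineq)
      have t2: "cmod (\<phi> (n+1) + \<phi> (n-1)) \<le> cmod (\<phi> (n+1)) + cmod (\<phi> (n-1))" by (rule norm_triangle_ineq)
      have t3: "cmod (complex_of_real (V n - E) * \<phi> n) = \<bar>V n - E\<bar> * cmod (\<phi> n)"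
        by (simp only: norm_mult norm_of_real)
      have "cmod (\<psi> n) \<le> cmod (\<phi> (n+1)) + cmod (\<phi> (n-1)) + \<bar>V n - E\<bar> * cmod (\<phi> n)"
        using t1 t2 t3 by linarith
      also have "\<dots> \<le> B + B + Vm * B"
        using \<phi>B bnd[of n] B0 by (intro add_mono mult_mono) auto
      finally show ?thesis by (simp add: Cb_def algebra_simps)
    qed
    define T where "T = {2*m - 1, 2*m, 2*m + 2*int L - 1, 2*m + 2*int L}"
    have \<psi>0: "\<psi> n = 0" if nT: "n \<notin> T" for n
    proof (cases "n < 2*m - 1 \<or> n > 2*m + 2*int L")
      case True
      then have "\<phi> (n+1) = 0" "\<phi> (n-1) = 0" "\<phi> n = 0" by (auto simp: \<phi>_def)
      then show ?thesis unfolding \<psi>e by simp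
    next
      case False
      with nT have r: "2*m + 1 \<le> n" "n \<le> 2*m + 2*int L - 2" by (auto simp: T_def)
      define j where "j = nat (n - 2*m)"
      have j: "1 \<le> j" "j + 1 < 2*L" "n = 2*m + int j" using r by (auto simp: j_def)
      have "\<phi> (n+1) = uu \<alpha> \<beta> z (j + 1)" using j by (auto simp: \<phi>_def nat_add_distrib)
      moreover have "\<phi> (n-1) = uu \<alpha> \<beta> z (j - 1)"
      proof -
        have "nat (n - 1 - 2*m) = j - 1" using j by auto
        then show ?thesis using j by (auto simp: \<phi>_def)
      qed
      moreover have "\<phi> n = uu \<alpha> \<beta> z j" using j by (auto simp: \<phi>_def)
      moreover have "V n = (if even j then a else b)" using m[of j] j by simp
      ultimately have "\<psi> n = uu \<alpha> \<beta> z (j + 1) + uu \<alpha> \<beta> z (j - 1) + complex_of_real ((if even j then a else b) - E) * uu \<alpha> \<beta> z j"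
        unfolding \<psi>e by simp
      also have "\<dots> = 0" by (rule uu_rec[OF e1 e2 j(1)])
      finally show ?thesis .
    qed
    have fT: "finite T" by (simp add: T_def)
    have \<psi>l2: "\<psi> \<in> l2Z" using l2_finite_support[of T \<psi>, OF fT \<psi>0] by blast
    have "nsq \<psi> = (\<Sum>n\<in>T. (cmod (\<psi> n))\<^sup>2)" using l2_finite_support[of T \<psi>, OF fT \<psi>0] by blast
    also have "\<dots> \<le> (\<Sum>n\<in>T. Cb\<^sup>2)"
      using \<psi>B by (intro sum_mono power_mono) auto
    also have "\<dots> = real (card T) * Cb\<^sup>2" by simp
    also have "\<dots> \<le> 4 * Cb\<^sup>2"
    proof -
      have "T = set [2*m - 1, 2*m, 2*m + 2*int L - 1, 2*m + 2*int L]" unfolding T_def by simp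
      then have "card T \<le> length [2*m - 1, 2*m, 2*m + 2*int L - 1, 2*m + 2*int L]" by (metis card_length)
      then have "card T \<le> 4" by simp
      then show ?thesis by (intro mult_right_mono) auto
    qed
    finally have "nsq \<psi> \<le> 4 * Cb\<^sup>2" .
    then have n\<psi>: "nsq \<psi> \<le> (2 * Cb)\<^sup>2" by (simp add: power_mult_distrib)
    have Cb0: "0 \<le> Cb" using B0 Vm0 by (simp add: Cb_def)
    have l\<psi>: "l2norm \<psi> \<le> 2 * Cb"
    proof -
      have "sqrt (nsq \<psi>) \<le> sqrt ((2 * Cb)\<^sup>2)" using n\<psi> by (rule real_sqrt_le_mono)
      also have "\<dots> = 2 * Cb" using Cb0 by (simp only: real_sqrt_abs abs_of_nonneg mult_nonneg_nonneg zero_le_numeral)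
      finally show ?thesis unfolding l2norm_nsq .
    qed
    have l\<psi>0: "0 \<le> l2norm \<psi>" by (simp add: l2norm_nsq nsq_nonneg)
    have "\<psi> = (\<lambda>n. schrod V \<phi> n - complex_of_real E * \<phi> n)" by (simp add: \<psi>_def fun_eq_iff)
    then have "G \<psi> = \<phi>" using Gl \<phi>l2 by simp
    then have "l2norm \<phi> = l2norm (G \<psi>)" by simp
    also have "\<dots> \<le> C * l2norm \<psi>" using Gb \<psi>l2 by blast
    also have "\<dots> \<le> \<bar>C\<bar> * (2 * Cb)"
    proof -
      have "C * l2norm \<psi> \<le> \<bar>C\<bar> * l2norm \<psi>" by (rule mult_right_mono) (simp_all add: l\<psi>0)
      also have "\<dots> \<le> \<bar>C\<bar> * (2 * Cb)" by (rule mult_left_mono[OF l\<psi>]) simp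
      finally show ?thesis .
    qed
    finally have "sqrt (real L * c0) \<le> \<bar>C\<bar> * (2 * Cb)" unfolding l2norm_nsq n\<phi> .
    moreover have "0 \<le> real L * c0" using c0 by simp
    ultimately have "(sqrt (real L * c0))\<^sup>2 \<le> (\<bar>C\<bar> * (2 * Cb))\<^sup>2"
      by (intro power_mono) auto
    then show ?thesis using c0 by simp
  qed
  define L where "L = nat (ceiling ((\<bar>C\<bar> * (2 * Cb))\<^sup>2 / c0)) + 1"
  have "real L * c0 \<le> (\<bar>C\<bar> * (2 * Cb))\<^sup>2" by (rule bound) (simp add: L_def)
  moreover have "(\<bar>C\<bar> * (2 * Cb))\<^sup>2 / c0 < real L" unfolding L_def by linarith
  then have "(\<bar>C\<bar> * (2 * Cb))\<^sup>2 < real L * c0" using c0 by (simp add: divide_less_eq)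
  ultimately show False by linarith
qed

lemma ae_window:
  fixes p0 p1 :: real and v :: "nat \<Rightarrow> bool" and L :: nat
  assumes p: "0 < p0" "p0 < 1" "0 < p1" "p1 < 1" and L: "L \<ge> 1"
  shows "AE \<xi> in bern_measure p0 p1. \<exists>m::int. \<forall>j<2*L. \<xi> (2*m + int j) = v j"
proof -
  define Mi where "Mi n = measure_pmf (bernoulli_pmf (if even n then p0 else p1))" for n :: int
  define M where "M = bern_measure p0 p1"
  have Mdef: "M = PiM UNIV Mi" by (simp add: M_def bern_measure_def Mi_def[abs_def])
  have Pi: "\<And>i. prob_space (Mi i)" by (simp add: Mi_def prob_space_measure_pmf)
  interpret P: prob_space M unfolding Mdef by (intro prob_space_PiM Pi)
  interpret PP: product_prob_space Mi UNIV
    by (simp add: product_prob_space_def product_prob_space_axioms_def product_sigma_finite_def Pi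
        prob_space_imp_sigma_finite)
  have spMi: "space (Mi i) = UNIV" for i by (simp add: Mi_def)
  have spMi': "\<And>x i. x i \<in> space (Mi i)" by (simp add: spMi)
  have setsMi: "sets (Mi i) = UNIV" for i by (simp add: Mi_def)
  have sp: "space M = UNIV" unfolding Mdef by (simp add: space_PiM spMi)
  have rv: "P.random_variable (Mi i) (\<lambda>\<xi>. \<xi> i)" for i
    unfolding Mdef by (rule measurable_component_singleton) simp
  have ind: "P.indep_vars Mi (\<lambda>i \<xi>. \<xi> i) UNIV"
  proof (subst P.indep_vars_iff_distr_eq_PiM)
    show "distr M (Pi\<^sub>M UNIV Mi) (\<lambda>x. \<lambda>i\<in>UNIV. x i) = Pi\<^sub>M UNIV (\<lambda>i. distr M (Mi i) (\<lambda>x. x i))"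
    proof -
      have "distr M (Pi\<^sub>M UNIV Mi) (\<lambda>x. \<lambda>i\<in>UNIV. x i) = M"
        unfolding Mdef restrict_UNIV by (rule distr_id)
      moreover have "Pi\<^sub>M UNIV (\<lambda>i. distr M (Mi i) (\<lambda>x. x i)) = M"
        unfolding Mdef by (intro PiM_cong refl distr_PiM_component) (auto simp: Pi)
      ultimately show ?thesis by simp
    qed
  qed (auto simp: rv)
  define Kb where "Kb k = (\<lambda>j. 2 * int (k*L) + int j) ` {..<2*L}" for k :: nat
  have disj: "disjoint_family_on Kb UNIV"
  unfolding disjoint_family_on_def
  proof (intro ballI impI)
    fix k k' :: nat assume "k \<noteq> k'"
    show "Kb k \<inter> Kb k' = {}"
    proof (rule ccontr)
      assume "Kb k \<inter> Kb k' \<noteq> {}"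
      then obtain j j' where j: "j < 2*L" "j' < 2*L" and e: "2 * int (k*L) + int j = 2 * int (k'*L) + int j'"
        unfolding Kb_def by auto
      then have "int (2*k*L + j) = int (2*k'*L + j')" by simp
      then have e': "2*k*L + j = 2*k'*L + j'" by linarith
      show False
      proof (cases "k < k'")
        case True
        then have "Suc k \<le> k'" by simp
        then have "2*Suc k*L \<le> 2*k'*L" by (intro mult_le_mono1) simp
        then have "2*k*L + 2*L \<le> 2*k'*L" by (simp add: algebra_simps)
        then show False using e' j by linarith
      next
        case False
        then have "k' < k" using \<open>k \<noteq> k'\<close> by simp
        then have "Suc k' \<le> k" by simp
        then have "2*Suc k'*L \<le> 2*k*L" by (intro mult_le_mono1) simp
        then have "2*k'*L + 2*L \<le> 2*k*L" by (simp add: algebra_simps)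
        then show False using e' j by linarith
      qed
    qed
  qed
  have ind2: "P.indep_vars (\<lambda>k. PiM (Kb k) Mi) (\<lambda>k \<xi>. restrict (\<lambda>i. \<xi> i) (Kb k)) UNIV"
    by (rule P.indep_vars_restrict[OF ind _ disj]) auto
  define Pr where "Pr k f = (\<exists>j<2*L. f (2 * int (k*L) + int j) \<noteq> v j)" for k :: nat and f :: "int \<Rightarrow> bool"
  have measPr: "{x \<in> space (PiM (Kb k) Mi). Pr k x} \<in> sets (PiM (Kb k) Mi)" for k
  proof -
    have "{x \<in> space (PiM (Kb k) Mi). Pr k x} = (\<Union>j<2*L. (\<lambda>x. x (2 * int (k*L) + int j)) -` {\<not> v j} \<inter> space (PiM (Kb k) Mi))"
      by (auto simp: Pr_def)
    also have "\<dots> \<in> sets (PiM (Kb k) Mi)"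
    proof (intro sets.finite_UN)
      fix j assume "j \<in> {..<2*L}"
      then have "2 * int (k*L) + int j \<in> Kb k" by (auto simp: Kb_def)
      then have "(\<lambda>x. x (2 * int (k*L) + int j)) \<in> PiM (Kb k) Mi \<rightarrow>\<^sub>M Mi (2 * int (k*L) + int j)"
        by (rule measurable_component_singleton)
      then show "(\<lambda>x. x (2 * int (k*L) + int j)) -` {\<not> v j} \<inter> space (PiM (Kb k) Mi) \<in> sets (PiM (Kb k) Mi)"
        by (rule measurable_sets) (simp add: setsMi)
    qed auto
    finally show ?thesis .
  qed
  define C where "C k = {x \<in> space M. Pr k (restrict (\<lambda>i. x i) (Kb k))}" for k
  have ind3: "P.indep_events C UNIV"
    unfolding C_def by (rule P.indep_eventsI_indep_vars[OF ind2]) (rule measPr)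
  have Ceq: "C k = {x. Pr k x}" for k
    unfolding C_def sp by (auto simp: Pr_def Kb_def)
  have Cev: "C k \<in> P.events" for k using ind3 by (auto simp: P.indep_events_def)
  define \<mu> where "\<mu> = min (min p0 (1-p0)) (min p1 (1-p1))"
  have \<mu>0: "0 < \<mu>" and \<mu>1: "\<mu> \<le> 1" using p by (auto simp: \<mu>_def)
  define r where "r = 1 - \<mu> ^ (2*L)"
  have r0: "0 \<le> r" and r1: "r < 1" using \<mu>0 \<mu>1 by (auto simp: r_def power_le_one)
  have probC: "P.prob (C k) \<le> r" for k
  proof -
    define w where "w i = v (nat (i - 2 * int (k*L)))" for i
    have fK: "finite (Kb k)" by (simp add: Kb_def)
    have cK: "card (Kb k) = 2*L" unfolding Kb_def by (subst card_image) (auto simp: inj_on_def)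
    have A: "space M - C k = prod_emb UNIV Mi (Kb k) (PiE (Kb k) (\<lambda>i. {w i}))"
    proof -
      have spU: "space (PiM UNIV Mi) = UNIV" using sp Mdef by simp
      show ?thesis unfolding Ceq sp prod_emb_def spU
        by (auto simp: Pr_def Kb_def w_def PiE_iff spMi)
    qed
    have "P.prob (space M - C k) = measure M (prod_emb UNIV Mi (Kb k) (PiE (Kb k) (\<lambda>i. {w i})))"
      by (simp only: A)
    also have "\<dots> = (\<Prod>i\<in>Kb k. measure (Mi i) {w i})"
      unfolding Mdef by (rule PP.measure_PiM_emb) (auto simp: fK setsMi)
    also have "\<dots> \<ge> (\<Prod>i\<in>Kb k. \<mu>)"
    proof (rule prod_mono)
      fix i assume "i \<in> Kb k"
      have "measure (Mi i) {w i} = pmf (bernoulli_pmf (if even i then p0 else p1)) (w i)"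
        by (simp add: Mi_def measure_pmf_single)
      moreover have "\<mu> \<le> pmf (bernoulli_pmf (if even i then p0 else p1)) (w i)"
        using p by (cases "w i"; cases "even i") (auto simp: \<mu>_def)
      ultimately show "0 \<le> \<mu> \<and> \<mu> \<le> measure (Mi i) {w i}" using \<mu>0 by simp
    qed
    finally have "\<mu> ^ (2*L) \<le> P.prob (space M - C k)" using cK by simp
    then show ?thesis using P.prob_compl[OF Cev[of k]] by (simp add: r_def)
  qed
  define N where "N = (\<Inter>k. C k)"
  have Nev: "N \<in> P.events" unfolding N_def using Cev by auto
  have probN: "P.prob N \<le> r ^ K" if K: "K \<ge> 1" for K
  proof -
    have "P.prob N \<le> P.prob (\<Inter>k\<in>{..<K}. C k)"
    proof (rule P.finite_measure_mono)
      show "(\<Inter>k\<in>{..<K}. C k) \<in> P.events" using K Cev by (intro sets.finite_INT) (auto simp: lessThan_empty_iff)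
    qed (auto simp: N_def)
    also have "\<dots> = (\<Prod>k\<in>{..<K}. P.prob (C k))"
    proof -
      have ne: "{..<K} \<noteq> {}" using K by (auto simp: lessThan_empty_iff)
      show ?thesis using ind3 ne unfolding P.indep_events_def by blast
    qed
    also have "\<dots> \<le> (\<Prod>k\<in>{..<K}. r)"
      by (rule prod_mono) (auto simp: probC)
    finally show ?thesis by simp
  qed
  have "(\<lambda>K. r ^ K) \<longlonglongrightarrow> 0" using r0 r1 by (intro LIMSEQ_power_zero) auto
  then have "P.prob N \<le> 0"
    by (rule LIMSEQ_le_const[of _ 0 "P.prob N"]) (use probN in \<open>auto intro!: exI[of _ 1]\<close>)
  then have "P.prob N = 0" using measure_nonneg[of M N] by linarith
  then have "N \<in> null_sets M" using Nev by (simp add: P.emeasure_eq_measure null_sets_def)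
  then have "AE \<xi> in M. \<xi> \<notin> N" by (rule AE_not_in)
  then have "AE \<xi> in M. \<exists>m::int. \<forall>j<2*L. \<xi> (2*m + int j) = v j"
  proof (rule eventually_mono)
    fix \<xi> assume "\<xi> \<notin> N"
    then obtain k where "\<not> Pr k \<xi>" unfolding N_def Ceq by auto
    then have "\<forall>j<2*L. \<xi> (2 * int (k*L) + int j) = v j" by (auto simp: Pr_def)
    then show "\<exists>m::int. \<forall>j<2*L. \<xi> (2*m + int j) = v j" by blast
  qed
  then show ?thesis unfolding M_def .
qed

lemma ae_good:
  fixes p0 p1 :: real
  assumes p: "0 < p0" "p0 < 1" "0 < p1" "p1 < 1"
  shows "AE \<xi> in bern_measure p0 p1. \<forall>x y :: bool. \<forall>L::nat. \<exists>m::int. \<forall>j<2*L. \<xi> (2*m + int j) = (if even j then x else y)"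
proof -
  have "AE \<xi> in bern_measure p0 p1. \<exists>m::int. \<forall>j<2*L. \<xi> (2*m + int j) = (if even j then x else y)" for x y L
  proof (cases "L \<ge> 1")
    case True then show ?thesis using ae_window[OF p True, of "\<lambda>j. if even j then x else y"] by simp
  next
    case False then show ?thesis by simp
  qed
  then show ?thesis by (simp add: AE_all_countable)
qed

definition lo :: "real \<Rightarrow> real \<Rightarrow> real" where "lo a b = (a + b - sqrt ((a-b)\<^sup>2 + 16)) / 2"
definition hi :: "real \<Rightarrow> real \<Rightarrow> real" where "hi a b = (a + b + sqrt ((a-b)\<^sup>2 + 16)) / 2"

lemma sqrt_gt_abs: "\<bar>x\<bar> < sqrt (x\<^sup>2 + 16)"
proof -
  have "sqrt (x\<^sup>2) < sqrt (x\<^sup>2 + 16)" by (rule real_sqrt_less_mono) simp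
  then show ?thesis by simp
qed

lemma lo_lt: "lo a b < a" "lo a b < b"
  using sqrt_gt_abs[of "a - b"] by (auto simp: lo_def abs_if split: if_splits)

lemma hi_gt: "a < hi a b" "b < hi a b"
  using sqrt_gt_abs[of "a - b"] by (auto simp: hi_def abs_if split: if_splits)

lemma sqrt_lip: "sqrt (x\<^sup>2 + 16) - sqrt (y\<^sup>2 + 16) \<le> \<bar>x - y\<bar>"
proof -
  define S where "S = sqrt (y\<^sup>2 + 16)"
  define d where "d = \<bar>x - y\<bar>"
  have B0: "0 \<le> S + d" by (simp add: S_def d_def)
  have ys: "\<bar>y\<bar> \<le> S" using sqrt_gt_abs[of y] by (simp add: S_def)
  have key: "y * (x - y) \<le> S * d"
  proof -
    have "y * (x - y) \<le> \<bar>y\<bar> * \<bar>x - y\<bar>" by (metis abs_ge_self abs_mult)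
    also have "\<dots> \<le> S * d" unfolding d_def using ys by (intro mult_right_mono) auto
    finally show ?thesis .
  qed
  have S2: "S * S = y\<^sup>2 + 16" unfolding S_def by simp
  have d2: "d * d = (x - y)\<^sup>2" unfolding d_def by (simp add: power2_eq_square)
  have e1: "(S + d)\<^sup>2 = S * S + 2 * (S * d) + d * d" by (simp add: power2_eq_square algebra_simps)
  have e2: "x\<^sup>2 = y\<^sup>2 + 2 * (y * (x - y)) + (x - y)\<^sup>2" by (simp add: power2_eq_square algebra_simps)
  have "x\<^sup>2 + 16 \<le> (S + d)\<^sup>2" unfolding e1 S2 d2 using e2 key by linarith
  then have "sqrt (x\<^sup>2 + 16) \<le> sqrt ((S + d)\<^sup>2)" by (rule real_sqrt_le_mono)
  also have "\<dots> = S + d" using B0 by simp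
  finally show ?thesis by (simp add: S_def d_def)
qed

lemma lo_mono: "a \<le> a' \<Longrightarrow> b \<le> b' \<Longrightarrow> lo a b \<le> lo a' b'"
  using sqrt_lip[of "a' - b'" "a - b"] by (auto simp: lo_def abs_if split: if_splits)

lemma hi_mono: "a \<le> a' \<Longrightarrow> b \<le> b' \<Longrightarrow> hi a b \<le> hi a' b'"
  using sqrt_lip[of "a - b" "a' - b'"] by (auto simp: hi_def abs_if split: if_splits)

lemma gt4_iff: "(E - a) * (E - b) > 4 \<longleftrightarrow> E < lo a b \<or> hi a b < E"
proof -
  define R where "R = sqrt ((a-b)\<^sup>2 + 16)"
  have R2: "R * R = (a-b)\<^sup>2 + 16" unfolding R_def by simp
  have s: "lo a b + hi a b = a + b" by (simp add: lo_def hi_def field_simps)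
  have "(a + b - R) * (a + b + R) = (a + b) * (a + b) - R * R" by (simp add: algebra_simps)
  also have "\<dots> = 4 * (a * b) - 16" unfolding R2 by (simp add: power2_eq_square algebra_simps)
  finally have pr: "(a + b - R) * (a + b + R) = 4 * (a * b) - 16" .
  have p: "lo a b * hi a b = a * b - 4" unfolding lo_def hi_def R_def[symmetric] using pr by simp
  have "(E - lo a b) * (E - hi a b) = E * E - E * (lo a b + hi a b) + lo a b * hi a b"
    by (simp add: algebra_simps)
  also have "\<dots> = (E - a) * (E - b) - 4" unfolding s p by (simp add: algebra_simps)
  finally have f: "(E - a) * (E - b) - 4 = (E - lo a b) * (E - hi a b)" by simp
  have lh: "lo a b < hi a b" using lo_lt hi_gt by (meson less_trans)
  have "(E - a) * (E - b) > 4 \<longleftrightarrow> 0 < (E - lo a b) * (E - hi a b)" using f by linarith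
  also have "\<dots> \<longleftrightarrow> E < lo a b \<or> hi a b < E" using lh by (auto simp: zero_less_mult_iff)
  finally show ?thesis .
qed

lemma gapc_iff: "((E-a)*(E-b) < 0 \<or> (E-a)*(E-b) > 4) \<longleftrightarrow>
   (E < lo a b \<or> hi a b < E \<or> (a < E \<and> E < b) \<or> (b < E \<and> E < a))"
  unfolding gt4_iff by (auto simp: mult_less_0_iff)


definition gapc :: "real \<Rightarrow> real \<Rightarrow> real \<Rightarrow> bool" where
  "gapc E a b \<longleftrightarrow> (E-a)*(E-b) < 0 \<or> (E-a)*(E-b) > 4"

lemma facts4:
  assumes "0 \<le> l0" "0 \<le> l1" "0 \<le> c1"
  shows "lo 0 c1 \<le> lo l0 c1" "lo l0 c1 \<le> lo l0 (c1+l1)" "lo 0 c1 \<le> lo 0 (c1+l1)" "lo 0 (c1+l1) \<le> lo l0 (c1+l1)"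
    "hi 0 c1 \<le> hi l0 c1" "hi l0 c1 \<le> hi l0 (c1+l1)" "hi 0 c1 \<le> hi 0 (c1+l1)" "hi 0 (c1+l1) \<le> hi l0 (c1+l1)"
  using assms by (auto intro!: lo_mono hi_mono)

lemma case1:
  assumes "0 \<le> l0" "0 \<le> l1" "0 \<le> c1" "l0 \<le> c1"
  shows "(gapc E 0 c1 \<and> gapc E l0 c1 \<and> gapc E 0 (c1+l1) \<and> gapc E l0 (c1+l1)) \<longleftrightarrow>
    (E < lo 0 c1 \<or> (0 < E \<and> E < lo l0 c1) \<or> (l0 < E \<and> E < c1) \<or> (hi l0 c1 < E \<and> E < c1+l1) \<or> hi l0 (c1+l1) < E)"
  unfolding gapc_def gapc_iff
  using facts4[OF assms(1-3)] lo_lt[where a=0 and b=c1] lo_lt[where a=l0 and b=c1] lo_lt[where a=0 and b="c1+l1"] lo_lt[where a=l0 and b="c1+l1"]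
    hi_gt[where a=0 and b=c1] hi_gt[where a=l0 and b=c1] hi_gt[where a=0 and b="c1+l1"] hi_gt[where a=l0 and b="c1+l1"] assms
  by smt

lemma case2:
  assumes "0 \<le> l0" "0 \<le> l1" "0 \<le> c1" "c1 < l0" "l0 < c1 + l1"
  shows "(gapc E 0 c1 \<and> gapc E l0 c1 \<and> gapc E 0 (c1+l1) \<and> gapc E l0 (c1+l1)) \<longleftrightarrow>
    (E < lo 0 c1 \<or> (0 < E \<and> E < lo l0 c1) \<or> (hi 0 c1 < E \<and> E < lo l0 (c1+l1)) \<or> (hi l0 c1 < E \<and> E < c1+l1) \<or> hi l0 (c1+l1) < E)"
  unfolding gapc_def gapc_iff
  using facts4[OF assms(1-3)] lo_lt[where a=0 and b=c1] lo_lt[where a=l0 and b=c1] lo_lt[where a=0 and b="c1+l1"] lo_lt[where a=l0 and b="c1+l1"]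
    hi_gt[where a=0 and b=c1] hi_gt[where a=l0 and b=c1] hi_gt[where a=0 and b="c1+l1"] hi_gt[where a=l0 and b="c1+l1"] assms
  by smt

lemma case3:
  assumes "0 \<le> l0" "0 \<le> l1" "0 \<le> c1" "c1 + l1 \<le> l0"
  shows "(gapc E 0 c1 \<and> gapc E l0 c1 \<and> gapc E 0 (c1+l1) \<and> gapc E l0 (c1+l1)) \<longleftrightarrow>
    (E < lo 0 c1 \<or> (0 < E \<and> E < lo l0 c1) \<or> (hi 0 c1 < E \<and> E < lo l0 (c1+l1)) \<or> (hi 0 (c1+l1) < E \<and> E < l0) \<or> hi l0 (c1+l1) < E)"
  unfolding gapc_def gapc_iff
  using facts4[OF assms(1-3)] lo_lt[where a=0 and b=c1] lo_lt[where a=l0 and b=c1] lo_lt[where a=0 and b="c1+l1"] lo_lt[where a=l0 and b="c1+l1"]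
    hi_gt[where a=0 and b=c1] hi_gt[where a=l0 and b=c1] hi_gt[where a=0 and b="c1+l1"] hi_gt[where a=l0 and b="c1+l1"] assms
  by smt

lemma delta_ex:
  assumes "gapc E a b"
  shows "\<exists>\<delta>>0. \<forall>d. 0 < d \<and> d \<le> \<delta> \<longrightarrow> 2*d \<le> \<bar>a - E\<bar> \<and> 2*d \<le> \<bar>b - E\<bar> \<and>
     ((a-E)*(b-E) > 0 \<longrightarrow> 1 \<le> (\<bar>a-E\<bar>/2 - d)*(\<bar>b-E\<bar>/2 - d))"
proof -
  define u where "u = \<bar>a - E\<bar>/2"
  define w where "w = \<bar>b - E\<bar>/2"
  have prod: "(a-E)*(b-E) = (E-a)*(E-b)" by (simp add: algebra_simps)
  have nz: "a - E \<noteq> 0" "b - E \<noteq> 0" using assms unfolding gapc_def by auto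
  then have u0: "u > 0" and w0: "w > 0" by (auto simp: u_def w_def)
  have uw: "u * w = \<bar>(a-E)*(b-E)\<bar>/4" by (simp add: u_def w_def abs_mult)
  show ?thesis
  proof (cases "(E-a)*(E-b) < 0")
    case True
    show ?thesis
    proof (intro exI[of _ "min u w"] conjI allI impI)
      show "0 < min u w" using u0 w0 by simp
      fix d assume d: "0 < d \<and> d \<le> min u w"
      then have du: "d \<le> u" "d \<le> w" by simp_all
      then show "2*d \<le> \<bar>a - E\<bar>" unfolding u_def by simp
      show "2*d \<le> \<bar>b - E\<bar>" using du unfolding w_def by simp
      assume "(a-E)*(b-E) > 0"
      then show "1 \<le> (\<bar>a-E\<bar>/2 - d)*(\<bar>b-E\<bar>/2 - d)" using True prod by linarith
    qed
  next
    case False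
    then have g4: "(a-E)*(b-E) > 4" using assms prod unfolding gapc_def by linarith
    then have uw1: "u * w > 1" using uw by simp
    define \<delta> where "\<delta> = min (min u w) ((u*w - 1)/(u+w))"
    have q0: "(u*w - 1)/(u+w) > 0" using u0 w0 uw1 by simp
    have \<delta>0: "\<delta> > 0" using u0 w0 q0 by (simp add: \<delta>_def)
    show ?thesis
    proof (intro exI[of _ \<delta>] conjI allI impI)
      show "0 < \<delta>" by (rule \<delta>0)
      fix d assume d: "0 < d \<and> d \<le> \<delta>"
      then have du: "d \<le> u" "d \<le> w" "d \<le> (u*w - 1)/(u+w)" by (simp_all add: \<delta>_def)
      show "2*d \<le> \<bar>a - E\<bar>" using du unfolding u_def by simp
      show "2*d \<le> \<bar>b - E\<bar>" using du unfolding w_def by simp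
      have "d * (u + w) \<le> u*w - 1" using du(3) u0 w0 by (simp add: pos_le_divide_eq)
      moreover have "(u - d) * (w - d) = u*w - d*(u+w) + d*d" by (simp add: algebra_simps)
      moreover have "0 \<le> d*d" by simp
      ultimately have "1 \<le> (u - d) * (w - d)" by linarith
      then show "1 \<le> (\<bar>a-E\<bar>/2 - d)*(\<bar>b-E\<bar>/2 - d)" by (simp add: u_def w_def)
    qed
  qed
qed

definition aval :: "real \<Rightarrow> bool \<Rightarrow> real" where "aval l0 x = (if x then l0 else 0)"
definition bval :: "real \<Rightarrow> real \<Rightarrow> bool \<Rightarrow> real" where "bval l1 c1 y = (if y then c1 + l1 else c1)"

lemma pot_eq: "pot l0 l1 c1 \<xi> n = (if even n then aval l0 (\<xi> n) else bval l1 c1 (\<xi> n))"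
  by (simp add: pot_def aval_def bval_def)

lemma Vbnd:
  assumes nn: "0 \<le> l0" "0 \<le> l1" "0 \<le> c1"
  shows "\<bar>pot l0 l1 c1 \<xi> n - E\<bar> \<le> l0 + l1 + c1 + \<bar>E\<bar>"
proof -
  have "0 \<le> pot l0 l1 c1 \<xi> n" "pot l0 l1 c1 \<xi> n \<le> l0 + l1 + c1"
    using nn by (auto simp: pot_def)
  moreover have "\<bar>pot l0 l1 c1 \<xi> n - E\<bar> \<le> \<bar>pot l0 l1 c1 \<xi> n\<bar> + \<bar>E\<bar>" by (rule abs_triangle_ineq4)
  ultimately show ?thesis by simp
qed

lemma spec_char:
  fixes l0 l1 c1 :: real and \<xi> :: "int \<Rightarrow> bool"
  assumes nn: "0 \<le> l0" "0 \<le> l1" "0 \<le> c1"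
  and good: "\<forall>x y :: bool. \<forall>L::nat. \<exists>m::int. \<forall>j<2*L. \<xi> (2*m + int j) = (if even j then x else y)"
  shows "E \<notin> schrod_spectrum (pot l0 l1 c1 \<xi>) \<longleftrightarrow> (\<forall>x y. gapc E (aval l0 x) (bval l1 c1 y))"
proof
  let ?V = "pot l0 l1 c1 \<xi>"
  have bnd: "\<bar>?V n - E\<bar> \<le> l0 + l1 + c1 + \<bar>E\<bar>" for n
    by (rule Vbnd[OF nn])
  assume ns: "E \<notin> schrod_spectrum ?V"
  show "\<forall>x y. gapc E (aval l0 x) (bval l1 c1 y)"
  proof (intro allI, rule ccontr)
    fix x y
    assume ng: "\<not> gapc E (aval l0 x) (bval l1 c1 y)"
    have "E \<in> schrod_spectrum ?V"
    proof (rule weyl[where a="aval l0 x" and b="bval l1 c1 y"])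
      show "0 \<le> (E - aval l0 x) * (E - bval l1 c1 y)" "(E - aval l0 x) * (E - bval l1 c1 y) \<le> 4"
        using ng unfolding gapc_def by auto
      show "\<bar>?V n - E\<bar> \<le> l0 + l1 + c1 + \<bar>E\<bar>" for n by (rule bnd)
      fix L :: nat
      obtain m where m: "\<forall>j<2*L. \<xi> (2*m + int j) = (if even j then x else y)" using good by blast
      have "\<forall>j<2*L. ?V (2*m + int j) = (if even j then aval l0 x else bval l1 c1 y)"
        using m by (auto simp: pot_eq)
      then show "\<exists>m::int. \<forall>j::nat. j < 2*L \<longrightarrow> ?V (2*m + int j) = (if even j then aval l0 x else bval l1 c1 y)"
        by blast
    qed
    then show False using ns by blast
  qed
next
  let ?V = "pot l0 l1 c1 \<xi>"
  assume all: "\<forall>x y. gapc E (aval l0 x) (bval l1 c1 y)"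
  define Q where "Q x y \<delta> \<longleftrightarrow> \<delta> > 0 \<and> (\<forall>d. 0 < d \<and> d \<le> \<delta> \<longrightarrow> 2*d \<le> \<bar>aval l0 x - E\<bar> \<and> 2*d \<le> \<bar>bval l1 c1 y - E\<bar> \<and>
     ((aval l0 x - E)*(bval l1 c1 y - E) > 0 \<longrightarrow> 1 \<le> (\<bar>aval l0 x - E\<bar>/2 - d)*(\<bar>bval l1 c1 y - E\<bar>/2 - d)))" for x y \<delta>
  have "\<forall>x y. \<exists>\<delta>. Q x y \<delta>" using delta_ex all unfolding Q_def by blast
  then obtain df where df: "\<And>x y. Q x y (df x y)" by metis
  define \<delta> where "\<delta> = min (min (df False False) (df False True)) (min (df True False) (df True True))"
  have dfp: "df x y > 0" for x y using df[of x y] unfolding Q_def by blast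
  have \<delta>0: "\<delta> > 0" using dfp unfolding \<delta>_def by simp
  have \<delta>le: "\<delta> \<le> df x y" for x y by (cases x; cases y) (auto simp: \<delta>_def)
  have P: "2*\<delta> \<le> \<bar>aval l0 x - E\<bar> \<and> 2*\<delta> \<le> \<bar>bval l1 c1 y - E\<bar> \<and>
     ((aval l0 x - E)*(bval l1 c1 y - E) > 0 \<longrightarrow> 1 \<le> (\<bar>aval l0 x - E\<bar>/2 - \<delta>)*(\<bar>bval l1 c1 y - E\<bar>/2 - \<delta>))" for x y
    using df[of x y] \<delta>0 \<delta>le[of x y] unfolding Q_def by blast
  show "E \<notin> schrod_spectrum ?V"
  proof (rule gap_not_spec[where \<delta>=\<delta> and D="l0 + l1 + c1 + \<bar>E\<bar>"])
    show "0 < \<delta>" by (rule \<delta>0)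
    show "2 * \<delta> \<le> \<bar>?V n - E\<bar>" for n
      using P[of "\<xi> n" "\<xi> n"] by (auto simp: pot_eq)
    show "\<bar>?V n - E\<bar> \<le> l0 + l1 + c1 + \<bar>E\<bar>" for n
      by (rule Vbnd[OF nn])
    fix n
    assume pos: "0 < (?V n - E) * (?V (n + 1) - E)"
    show "1 \<le> (\<bar>?V n - E\<bar> / 2 - \<delta>) * (\<bar>?V (n + 1) - E\<bar> / 2 - \<delta>)"
    proof (cases "even n")
      case True
      then have "odd (n+1)" by simp
      then show ?thesis using True pos P[of "\<xi> n" "\<xi> (n+1)"] by (simp add: pot_eq)
    next
      case False
      then have e: "even (n+1)" by simp
      have "0 < (aval l0 (\<xi> (n+1)) - E) * (bval l1 c1 (\<xi> n) - E)"
        using pos False e by (simp add: pot_eq mult.commute)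
      then have "1 \<le> (\<bar>aval l0 (\<xi> (n+1)) - E\<bar>/2 - \<delta>)*(\<bar>bval l1 c1 (\<xi> n) - E\<bar>/2 - \<delta>)"
        using P[of "\<xi> (n+1)" "\<xi> n"] by blast
      then show ?thesis using False e by (simp add: pot_eq mult.commute)
    qed
  qed
qed

lemma all_gapc:
  "(\<forall>x y. gapc E (aval l0 x) (bval l1 c1 y)) \<longleftrightarrow>
    (gapc E 0 c1 \<and> gapc E l0 c1 \<and> gapc E 0 (c1+l1) \<and> gapc E l0 (c1+l1))"
proof
  assume a: "\<forall>x y. gapc E (aval l0 x) (bval l1 c1 y)"
  have "gapc E (aval l0 False) (bval l1 c1 False)" "gapc E (aval l0 True) (bval l1 c1 False)"
    "gapc E (aval l0 False) (bval l1 c1 True)" "gapc E (aval l0 True) (bval l1 c1 True)" using a by blast+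
  then show "gapc E 0 c1 \<and> gapc E l0 c1 \<and> gapc E 0 (c1+l1) \<and> gapc E l0 (c1+l1)"
    by (simp add: aval_def bval_def)
next
  assume "gapc E 0 c1 \<and> gapc E l0 c1 \<and> gapc E 0 (c1+l1) \<and> gapc E l0 (c1+l1)"
  then show "\<forall>x y. gapc E (aval l0 x) (bval l1 c1 y)"
    by (intro allI, case_tac x; case_tac y) (simp_all add: aval_def bval_def)
qed


lemma forms:
  fixes l0 l1 c1 :: real
  shows "lo 0 c1 = (c1 - sqrt (c1\<^sup>2 + 16)) / 2"
  "hi 0 c1 = (c1 + sqrt (c1\<^sup>2 + 16)) / 2"
  "lo l0 c1 = (l0 + c1 - sqrt ((l0 + c1)\<^sup>2 - 4 * (c1 * l0 - 4))) / 2"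
  "hi l0 c1 = (l0 + c1 + sqrt ((l0 + c1)\<^sup>2 - 4 * (c1 * l0 - 4))) / 2"
  "lo l0 (c1 + l1) = (l0 + l1 + c1 - sqrt ((l0 + l1 + c1)\<^sup>2 - 4 * (l0 * (l1 + c1) - 4))) / 2"
  "hi l0 (c1 + l1) = (l0 + l1 + c1 + sqrt ((l0 + l1 + c1)\<^sup>2 - 4 * (l0 * (l1 + c1) - 4))) / 2"
  "hi 0 (c1 + l1) = (c1 + l1 + sqrt ((c1 + l1)\<^sup>2 + 16)) / 2"
proof -
  have e1: "(l0 - c1)\<^sup>2 + 16 = (l0 + c1)\<^sup>2 - 4 * (c1 * l0 - 4)" by (simp add: power2_eq_square algebra_simps)
  have e2: "(l0 - (c1 + l1))\<^sup>2 + 16 = (l0 + l1 + c1)\<^sup>2 - 4 * (l0 * (l1 + c1) - 4)" by (simp add: power2_eq_square algebra_simps)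
  have e3: "l0 + (c1 + l1) = l0 + l1 + c1" by simp
  show "lo 0 c1 = (c1 - sqrt (c1\<^sup>2 + 16)) / 2" "hi 0 c1 = (c1 + sqrt (c1\<^sup>2 + 16)) / 2"
    "hi 0 (c1 + l1) = (c1 + l1 + sqrt ((c1 + l1)\<^sup>2 + 16)) / 2"
    by (simp_all add: lo_def hi_def power2_eq_square algebra_simps)
  show "lo l0 c1 = (l0 + c1 - sqrt ((l0 + c1)\<^sup>2 - 4 * (c1 * l0 - 4))) / 2"
    "hi l0 c1 = (l0 + c1 + sqrt ((l0 + c1)\<^sup>2 - 4 * (c1 * l0 - 4))) / 2"
    unfolding lo_def hi_def e1 by simp_all
  show "lo l0 (c1 + l1) = (l0 + l1 + c1 - sqrt ((l0 + l1 + c1)\<^sup>2 - 4 * (l0 * (l1 + c1) - 4))) / 2"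
    "hi l0 (c1 + l1) = (l0 + l1 + c1 + sqrt ((l0 + l1 + c1)\<^sup>2 - 4 * (l0 * (l1 + c1) - 4))) / 2"
    unfolding lo_def hi_def e2 e3 by simp_all
qed

theorem mainTheorem6:
  fixes l0 l1 c1 p0 p1 :: real
  assumes "l0 \<ge> 0" "l1 \<ge> 0" "c1 \<ge> 0"
    and "0 < p0" "p0 < 1" "0 < p1" "p1 < 1"
  defines "R1 \<equiv> sqrt ((l0 + c1)\<^sup>2 - 4 * (c1 * l0 - 4))"
    and "R2 \<equiv> sqrt ((l0 + l1 + c1)\<^sup>2 - 4 * (l0 * (l1 + c1) - 4))"
  shows
   "(l0 \<le> c1 \<and> c1 \<le> c1 + l1 \<longrightarrow>
      (AE \<xi> in bern_measure p0 p1. UNIV - schrod_spectrum (pot l0 l1 c1 \<xi>) =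
          {..<(c1 - sqrt (c1\<^sup>2 + 16)) / 2}
        \<union> {0<..<(l0 + c1 - R1) / 2}
        \<union> {l0<..<c1}
        \<union> {(l0 + c1 + R1) / 2<..<c1 + l1}
        \<union> {(l0 + l1 + c1 + R2) / 2<..})) \<and>
    (c1 < l0 \<and> l0 < c1 + l1 \<longrightarrow>
      (AE \<xi> in bern_measure p0 p1. UNIV - schrod_spectrum (pot l0 l1 c1 \<xi>) =
          {..<(c1 - sqrt (c1\<^sup>2 + 16)) / 2}
        \<union> {0<..<(l0 + c1 - R1) / 2}
        \<union> {(c1 + sqrt (c1\<^sup>2 + 16)) / 2<..<(l0 + l1 + c1 - R2) / 2}
        \<union> {(l0 + c1 + R1) / 2<..<c1 + l1}
        \<union> {(l0 + l1 + c1 + R2) / 2<..})) \<and>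
    (c1 \<le> c1 + l1 \<and> c1 + l1 \<le> l0 \<longrightarrow>
      (AE \<xi> in bern_measure p0 p1. UNIV - schrod_spectrum (pot l0 l1 c1 \<xi>) =
          {..<(c1 - sqrt (c1\<^sup>2 + 16)) / 2}
        \<union> {0<..<(l0 + c1 - R1) / 2}
        \<union> {(c1 + sqrt (c1\<^sup>2 + 16)) / 2<..<(l0 + l1 + c1 - R2) / 2}
        \<union> {(c1 + l1 + sqrt ((c1 + l1)\<^sup>2 + 16)) / 2<..<l0}
        \<union> {(l0 + l1 + c1 + R2) / 2<..}))"
proof -
  let ?G = "\<lambda>\<xi>::int \<Rightarrow> bool. \<forall>x y :: bool. \<forall>L::nat. \<exists>m::int. \<forall>j<2*L. \<xi> (2*m + int j) = (if even j then x else y)"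
  have AEg: "AE \<xi> in bern_measure p0 p1. ?G \<xi>" by (rule ae_good) (use assms in auto)
  have nn: "0 \<le> l0" "0 \<le> l1" "0 \<le> c1" using assms by auto
  have key: "UNIV - schrod_spectrum (pot l0 l1 c1 \<xi>) =
      {E. gapc E 0 c1 \<and> gapc E l0 c1 \<and> gapc E 0 (c1+l1) \<and> gapc E l0 (c1+l1)}" if g: "?G \<xi>" for \<xi>
    using spec_char[OF nn g] all_gapc by auto
  have R1: "R1 = sqrt ((l0 + c1)\<^sup>2 - 4 * (c1 * l0 - 4))" and R2: "R2 = sqrt ((l0 + l1 + c1)\<^sup>2 - 4 * (l0 * (l1 + c1) - 4))"
    using assms by simp_all
  have F: "lo 0 c1 = (c1 - sqrt (c1\<^sup>2 + 16)) / 2"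
    "hi 0 c1 = (c1 + sqrt (c1\<^sup>2 + 16)) / 2"
    "lo l0 c1 = (l0 + c1 - R1) / 2" "hi l0 c1 = (l0 + c1 + R1) / 2"
    "lo l0 (c1 + l1) = (l0 + l1 + c1 - R2) / 2" "hi l0 (c1 + l1) = (l0 + l1 + c1 + R2) / 2"
    "hi 0 (c1 + l1) = (c1 + l1 + sqrt ((c1 + l1)\<^sup>2 + 16)) / 2"
    unfolding R1 R2 by (rule forms)+
  show ?thesis
  proof (intro conjI impI)
    assume c: "l0 \<le> c1 \<and> c1 \<le> c1 + l1"
    show "AE \<xi> in bern_measure p0 p1. UNIV - schrod_spectrum (pot l0 l1 c1 \<xi>) =
          {..<(c1 - sqrt (c1\<^sup>2 + 16)) / 2}
        \<union> {0<..<(l0 + c1 - R1) / 2}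
        \<union> {l0<..<c1}
        \<union> {(l0 + c1 + R1) / 2<..<c1 + l1}
        \<union> {(l0 + l1 + c1 + R2) / 2<..}"
      using AEg
    proof (rule eventually_mono)
      fix \<xi> assume g: "?G \<xi>"
      show "UNIV - schrod_spectrum (pot l0 l1 c1 \<xi>) =
          {..<(c1 - sqrt (c1\<^sup>2 + 16)) / 2}
        \<union> {0<..<(l0 + c1 - R1) / 2}
        \<union> {l0<..<c1}
        \<union> {(l0 + c1 + R1) / 2<..<c1 + l1}
        \<union> {(l0 + l1 + c1 + R2) / 2<..}" (is "_ = ?R")
      proof (rule set_eqI)
        fix E
        have cc: "l0 \<le> c1" using c by auto
        show "E \<in> UNIV - schrod_spectrum (pot l0 l1 c1 \<xi>) \<longleftrightarrow> E \<in> ?R"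
          unfolding key[OF g] mem_Collect_eq case1[OF nn cc, of E] F by auto
      qed
    qed
  next
    assume c: "c1 < l0 \<and> l0 < c1 + l1"
    show "AE \<xi> in bern_measure p0 p1. UNIV - schrod_spectrum (pot l0 l1 c1 \<xi>) =
          {..<(c1 - sqrt (c1\<^sup>2 + 16)) / 2}
        \<union> {0<..<(l0 + c1 - R1) / 2}
        \<union> {(c1 + sqrt (c1\<^sup>2 + 16)) / 2<..<(l0 + l1 + c1 - R2) / 2}
        \<union> {(l0 + c1 + R1) / 2<..<c1 + l1}
        \<union> {(l0 + l1 + c1 + R2) / 2<..}"
      using AEg
    proof (rule eventually_mono)
      fix \<xi> assume g: "?G \<xi>"
      show "UNIV - schrod_spectrum (pot l0 l1 c1 \<xi>) =
          {..<(c1 - sqrt (c1\<^sup>2 + 16)) / 2}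
        \<union> {0<..<(l0 + c1 - R1) / 2}
        \<union> {(c1 + sqrt (c1\<^sup>2 + 16)) / 2<..<(l0 + l1 + c1 - R2) / 2}
        \<union> {(l0 + c1 + R1) / 2<..<c1 + l1}
        \<union> {(l0 + l1 + c1 + R2) / 2<..}" (is "_ = ?R")
      proof (rule set_eqI)
        fix E
        have cc: "c1 < l0" "l0 < c1 + l1" using c by auto
        show "E \<in> UNIV - schrod_spectrum (pot l0 l1 c1 \<xi>) \<longleftrightarrow> E \<in> ?R"
          unfolding key[OF g] mem_Collect_eq case2[OF nn cc, of E] F by auto
      qed
    qed
  next
    assume c: "c1 \<le> c1 + l1 \<and> c1 + l1 \<le> l0"
    show "AE \<xi> in bern_measure p0 p1. UNIV - schrod_spectrum (pot l0 l1 c1 \<xi>) =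
          {..<(c1 - sqrt (c1\<^sup>2 + 16)) / 2}
        \<union> {0<..<(l0 + c1 - R1) / 2}
        \<union> {(c1 + sqrt (c1\<^sup>2 + 16)) / 2<..<(l0 + l1 + c1 - R2) / 2}
        \<union> {(c1 + l1 + sqrt ((c1 + l1)\<^sup>2 + 16)) / 2<..<l0}
        \<union> {(l0 + l1 + c1 + R2) / 2<..}"
      using AEg
    proof (rule eventually_mono)
      fix \<xi> assume g: "?G \<xi>"
      show "UNIV - schrod_spectrum (pot l0 l1 c1 \<xi>) =
          {..<(c1 - sqrt (c1\<^sup>2 + 16)) / 2}
        \<union> {0<..<(l0 + c1 - R1) / 2}
        \<union> {(c1 + sqrt (c1\<^sup>2 + 16)) / 2<..<(l0 + l1 + c1 - R2) / 2}
        \<union> {(c1 + l1 + sqrt ((c1 + l1)\<^sup>2 + 16)) / 2<..<l0}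
        \<union> {(l0 + l1 + c1 + R2) / 2<..}" (is "_ = ?R")
      proof (rule set_eqI)
        fix E
        have cc: "c1 + l1 \<le> l0" using c by auto
        show "E \<in> UNIV - schrod_spectrum (pot l0 l1 c1 \<xi>) \<longleftrightarrow> E \<in> ?R"
          unfolding key[OF g] mem_Collect_eq case3[OF nn cc, of E] F by auto
      qed
    qed
  qed
qed

end
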